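(* Let $n\ge1$ be an integer and, for $f\in C(\triangle_H)$, define $$\mathcal L_nf(\mathbf t)=\sum_{\mathbf j\in\Lambda_n^\circ}f(\tfrac{\mathbf j}{4n})\,\ell^\circ_{\mathbf j,n}(\mathbf t),\qquad \ell^\circ_{\mathbf j,n}(\mathbf t)=\frac{144}{n^3}\sum_{\mathbf k\in\Lambda_n^\circ}\mathsf{TS}_{\mathbf k}(\mathbf t)\overline{\mathsf{TS}_{\mathbf k}(\tfrac{\mathbf j}{4n})}.$$ Then $\mathcal L_nf$ is the unique function in $\mathcal{TS}_n$ satisfying $\mathcal L_nf(\tfrac{\mathbf j}{4n})=f(\tfrac{\mathbf j}{4n})$ for all $\mathbf j\in\Lambda_n^\circ$. Furthermore, $\ell^\circ_{\mathbf j,n}$ is real and $$\ell^\circ_{\mathbf j,n}(\mathbf t)=\frac6{n^3}\,\mathcal P^-_{\mathbf t}\Big[\Theta_n(\mathbf t-\tfrac{\mathbf j}{4n})-\Theta_{n-1}(\mathbf t-\tfrac{\mathbf j}{4n})\Big],$$ where $\mathcal P^-_{\mathbf t}$ denotes $\mathcal P^-$ acting in the variable $\mathbf t$.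
   Context: Let $\mathbb R^4_H=\{\mathbf t\in\mathbb R^4: t_1+t_2+t_3+t_4=0\}$, $\mathbb Z^4_H=\mathbb Z^4\cap\mathbb R^4_H$, $\mathbb H=\{\mathbf k\in\mathbb Z^4_H: k_1\equiv k_2\equiv k_3\equiv k_4\pmod4\}$, $\phi_{\mathbf k}(\mathbf t)=e^{\frac{\pi i}{2}\mathbf k\cdot\mathbf t}$. Let $\mathcal G=S_4$ act on $\mathbf t$ by permuting coordinates, $\mathbf t\mapsto\mathbf t\sigma$, and let $\operatorname{sgn}\sigma$ be the sign of $\sigma$. Define $\mathcal P^-f(\mathbf t)=\frac1{24}\sum_{\sigma\in\mathcal G}\operatorname{sgn}(\sigma)f(\mathbf t\sigma)$ and $\mathsf{TS}_{\mathbf k}=-\mathcal P^-\phi_{\mathbf k}$. Let $\triangle_H=\{\mathbf t\in\mathbb R^4_H: t_1-t_2,\,t_2-t_3,\,t_3-t_4,\,t_1-t_4\in[0,1]\}$, $\Lambda_n^\circ=\{\mathbf k\in\mathbb H: k_4<k_3<k_2<k_1<k_4+4n\}$ and $\mathcal{TS}_n=\operatorname{span}\{\mathsf{TS}_{\mathbf k}:\mathbf k\in\Lambda_n^\circ\}$. Let $\Theta_m(\mathbf t)=\prod_{j=1}^4\frac{\sin\pi m t_j}{\sin\pi t_j}$ (continuous extension at integer $t_j$). *)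

theory Defs
  imports "HOL-Analysis.Analysis" "HOL-Combinatorics.Permutations"
begin

definition R4H :: "(real^4) set" where
  "R4H = {t. (\<Sum>i\<in>UNIV. t$i) = 0}"

definition Hlat :: "(int^4) set" where
  "Hlat = {k. (\<Sum>i\<in>UNIV. k$i) = 0 \<and>
     k$1 mod 4 = k$2 mod 4 \<and> k$2 mod 4 = k$3 mod 4 \<and> k$3 mod 4 = k$4 mod 4}"

definition phi :: "int^4 \<Rightarrow> real^4 \<Rightarrow> complex" where
  "phi k t = exp (complex_of_real (pi / 2) * \<i> * complex_of_real (\<Sum>i\<in>UNIV. real_of_int (k$i) * t$i))"

definition perm_vec :: "real^4 \<Rightarrow> (4 \<Rightarrow> 4) \<Rightarrow> real^4" where
  "perm_vec t \<sigma> = (\<chi> i. t $ \<sigma> i)"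

definition Pminus :: "(real^4 \<Rightarrow> 'a::field_char_0) \<Rightarrow> real^4 \<Rightarrow> 'a" where
  "Pminus f t = (\<Sum>\<sigma>\<in>{\<sigma>. \<sigma> permutes (UNIV::4 set)}. of_int (sign \<sigma>) * f (perm_vec t \<sigma>)) / 24"

definition TS :: "int^4 \<Rightarrow> real^4 \<Rightarrow> complex" where
  "TS k t = - Pminus (phi k) t"

definition triangleH :: "(real^4) set" where
  "triangleH = {t \<in> R4H. t$1 - t$2 \<in> {0..1} \<and> t$2 - t$3 \<in> {0..1} \<and>
                          t$3 - t$4 \<in> {0..1} \<and> t$1 - t$4 \<in> {0..1}}"

definition Lambda :: "nat \<Rightarrow> (int^4) set" where
  "Lambda n = {k \<in> Hlat. k$4 < k$3 \<and> k$3 < k$2 \<and> k$2 < k$1 \<and> k$1 < k$4 + 4 * int n}"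

definition TSspace :: "nat \<Rightarrow> (real^4 \<Rightarrow> complex) set" where
  "TSspace n = {g. \<exists>c :: int^4 \<Rightarrow> complex. g = (\<lambda>t. \<Sum>k\<in>Lambda n. c k * TS k t)}"

text \<open>sin(pi m x)/sin(pi x), continuously extended at integers x.\<close>
definition dir1 :: "nat \<Rightarrow> real \<Rightarrow> real" where
  "dir1 m x = (if x \<in> \<int> then real m * cos (pi * real m * x) / cos (pi * x)
               else sin (pi * real m * x) / sin (pi * x))"

definition Theta :: "nat \<Rightarrow> real^4 \<Rightarrow> real" where
  "Theta m t = (\<Prod>i\<in>UNIV. dir1 m (t$i))"

definition node :: "nat \<Rightarrow> int^4 \<Rightarrow> real^4" where
  "node n j = (\<chi> i. real_of_int (j$i) / (4 * real n))"

definition ell :: "nat \<Rightarrow> int^4 \<Rightarrow> real^4 \<Rightarrow> complex" where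
  "ell n j t = complex_of_real (144 / real n ^ 3) *
     (\<Sum>k\<in>Lambda n. TS k t * cnj (TS k (node n j)))"

definition Lint :: "nat \<Rightarrow> (real^4 \<Rightarrow> complex) \<Rightarrow> real^4 \<Rightarrow> complex" where
  "Lint n f t = (\<Sum>j\<in>Lambda n. f (node n j) * ell n j t)"

end

theory Submission
  imports Defs
begin

abbreviation perms :: "(4 \<Rightarrow> 4) set" where "perms \<equiv> {\<sigma>. \<sigma> permutes (UNIV::4 set)}"

lemma finite_perms: "finite perms"
  by (simp add: finite_permutations)

lemma card_perms: "card perms = 24"
proof -
  have "card perms = fact (card (UNIV::4 set))" by (rule card_permutations) auto
  also have "card (UNIV::4 set) = 4" by simp
  finally show ?thesis by (simp add: fact_numeral)
qed

definition ipv :: "int^4 \<Rightarrow> (4 \<Rightarrow> 4) \<Rightarrow> int^4" where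
  "ipv k \<sigma> = (\<chi> i. k $ \<sigma> i)"

lemma ipv_nth[simp]: "ipv k \<sigma> $ i = k $ \<sigma> i" by (simp add: ipv_def)
lemma perm_vec_nth[simp]: "perm_vec t \<sigma> $ i = t $ \<sigma> i" by (simp add: perm_vec_def)

lemma ipv_comp: "ipv (ipv k \<sigma>) \<tau> = ipv k (\<sigma> \<circ> \<tau>)"
  by (simp add: vec_eq_iff)
lemma perm_vec_comp: "perm_vec (perm_vec t \<sigma>) \<tau> = perm_vec t (\<sigma> \<circ> \<tau>)"
  by (simp add: vec_eq_iff)
lemma ipv_id[simp]: "ipv k id = k" by (simp add: vec_eq_iff)
lemma perm_vec_id[simp]: "perm_vec t id = t" by (simp add: vec_eq_iff)

lemma node_ipv: "node n (ipv j \<sigma>) = perm_vec (node n j) \<sigma>"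
  by (simp add: vec_eq_iff node_def)

lemma sum_perm4: "\<sigma> permutes (UNIV::4 set) \<Longrightarrow> (\<Sum>i\<in>UNIV. f (\<sigma> i)) = (\<Sum>i\<in>UNIV. f i)"
  using sum.permute[of \<sigma> UNIV f] by (simp add: o_def)

lemma sum_perm_vec: "\<sigma> permutes UNIV \<Longrightarrow> (\<Sum>i\<in>UNIV. perm_vec t \<sigma> $ i) = (\<Sum>i\<in>UNIV. t $ i)"
  using sum_perm4[of \<sigma> "\<lambda>i. t$i"] by simp

lemma sum_ipv: "\<sigma> permutes UNIV \<Longrightarrow> (\<Sum>i\<in>UNIV. ipv t \<sigma> $ i) = (\<Sum>i\<in>UNIV. t $ i)"
  using sum_perm4[of \<sigma> "\<lambda>i. t$i"] by simp

lemma Hlat_iff: "k \<in> Hlat \<longleftrightarrow> (\<Sum>i\<in>UNIV. k$i) = 0 \<and> (\<forall>a b. k$a mod 4 = k$b mod 4)"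
  unfolding Hlat_def forall_4 by auto

lemma Hlat_ipv: "k \<in> Hlat \<Longrightarrow> \<sigma> permutes UNIV \<Longrightarrow> ipv k \<sigma> \<in> Hlat"
  using sum_perm4[of \<sigma> "($) k"] by (simp add: Hlat_iff)

lemma Hlat_diff: "k \<in> Hlat \<Longrightarrow> k' \<in> Hlat \<Longrightarrow> k - k' \<in> Hlat"
  unfolding Hlat_iff by (auto simp: sum_subtractf intro: mod_diff_cong)

lemma R4H_perm: "t \<in> R4H \<Longrightarrow> \<sigma> permutes UNIV \<Longrightarrow> perm_vec t \<sigma> \<in> R4H"
  using sum_perm4[of \<sigma> "($) t"] by (simp add: R4H_def)

lemma R4H_diff: "t \<in> R4H \<Longrightarrow> s \<in> R4H \<Longrightarrow> t - s \<in> R4H"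
  by (simp add: R4H_def sum_subtractf)

lemma node_R4H: "j \<in> Hlat \<Longrightarrow> node n j \<in> R4H"
proof -
  assume "j \<in> Hlat"
  then have "(\<Sum>i\<in>UNIV. real_of_int (j$i)) = 0" unfolding Hlat_iff by (metis of_int_0 of_int_sum)
  then show ?thesis unfolding R4H_def node_def by (simp add: sum_divide_distrib[symmetric])
qed

lemma phi_perm: "\<sigma> permutes UNIV \<Longrightarrow> phi k (perm_vec t \<sigma>) = phi (ipv k (inv \<sigma>)) t"
proof -
  assume p: "\<sigma> permutes UNIV"
  have "(\<Sum>i\<in>UNIV. real_of_int (k$i) * t$(\<sigma> i)) = (\<Sum>i\<in>UNIV. real_of_int (k$(inv \<sigma> (\<sigma> i))) * t$(\<sigma> i))"
    using permutes_inverses(2)[OF p] by simp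
  also have "\<dots> = (\<Sum>i\<in>UNIV. real_of_int (k$(inv \<sigma> i)) * t$i)"
    using sum_perm4[OF p, of "\<lambda>i. real_of_int (k$(inv \<sigma> i)) * t$i"] by simp
  finally show ?thesis unfolding phi_def by simp
qed

lemma phi_add: "phi a t * phi b t = phi (a + b) t"
  unfolding phi_def by (simp add: exp_add[symmetric] distrib_left distrib_right sum.distrib)

lemma cnj_phi: "cnj (phi a t) = phi (-a) t"
  unfolding phi_def by (simp add: exp_cnj sum_negf)

lemma phi_mult_cnj: "phi a t * cnj (phi b t) = phi (a - b) t"
  by (simp add: cnj_phi phi_add)

lemma phi_mult_cnj2: "phi a t * cnj (phi a s) = phi a (t - s)"
  unfolding phi_def by (simp add: exp_cnj exp_add[symmetric] right_diff_distrib left_diff_distrib sum_subtractf)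

lemma phi_node_sym: "phi k (node n j) = phi j (node n k)"
  unfolding phi_def node_def by (simp add: mult.commute)

lemma perm_permutation: "\<sigma> permutes (UNIV::4 set) \<Longrightarrow> permutation \<sigma>"
  using permutes_imp_permutation[of UNIV \<sigma>] by simp

lemma sum_sign_compose:
  fixes F :: "(4 \<Rightarrow> 4) \<Rightarrow> 'a::comm_ring_1"
  assumes t: "\<tau> permutes UNIV"
  shows "(\<Sum>p\<in>perms. of_int (sign p) * F (\<tau> \<circ> p)) = of_int (sign \<tau>) * (\<Sum>p\<in>perms. of_int (sign p) * F p)"
proof -
  have "(\<Sum>p\<in>perms. of_int (sign p) * F p) = (\<Sum>p\<in>perms. of_int (sign (\<tau> \<circ> p)) * F (\<tau> \<circ> p))"
    by (rule setum_permutations_compose_left[OF t])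
  also have "\<dots> = (\<Sum>p\<in>perms. of_int (sign \<tau>) * (of_int (sign p) * F (\<tau> \<circ> p)))"
    by (rule sum.cong) (auto simp: sign_compose perm_permutation t)
  also have "\<dots> = of_int (sign \<tau>) * (\<Sum>p\<in>perms. of_int (sign p) * F (\<tau> \<circ> p))"
    by (simp add: sum_distrib_left)
  finally have eq: "(\<Sum>p\<in>perms. of_int (sign p) * F p) = of_int (sign \<tau>) * (\<Sum>p\<in>perms. of_int (sign p) * F (\<tau> \<circ> p))" .
  have ss: "of_int (sign \<tau>) * of_int (sign \<tau>) = (1::'a)" by (simp flip: of_int_mult)
  show ?thesis unfolding eq mult.assoc[symmetric] ss by simp
qed

lemma TS_alt: "TS k t = - (\<Sum>\<sigma>\<in>perms. of_int (sign \<sigma>) * phi (ipv k \<sigma>) t) / 24"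
proof -
  have "(\<Sum>\<sigma>\<in>perms. of_int (sign \<sigma>) * phi k (perm_vec t \<sigma>)) = (\<Sum>\<sigma>\<in>perms. of_int (sign \<sigma>) * phi (ipv k (inv \<sigma>)) t)"
    by (rule sum.cong) (auto simp: phi_perm)
  also have "\<dots> = (\<Sum>\<sigma>\<in>perms. of_int (sign (inv \<sigma>)) * phi (ipv k (inv (inv \<sigma>))) t)"
    by (rule sum_permutations_inverse)
  also have "\<dots> = (\<Sum>\<sigma>\<in>perms. of_int (sign \<sigma>) * phi (ipv k \<sigma>) t)"
    by (rule sum.cong) (auto simp: sign_inverse perm_permutation permutes_inv_inv)
  finally show ?thesis unfolding TS_def Pminus_def by simp
qed

lemma TS_perm_t: "\<tau> permutes UNIV \<Longrightarrow> TS k (perm_vec t \<tau>) = of_int (sign \<tau>) * TS k t"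
  unfolding TS_def Pminus_def perm_vec_comp
  using sum_sign_compose[of \<tau> "\<lambda>p. phi k (perm_vec t p)"] by simp

lemma TS_perm_k: "\<tau> permutes UNIV \<Longrightarrow> TS (ipv k \<tau>) t = of_int (sign \<tau>) * TS k t"
  unfolding TS_alt ipv_comp
  using sum_sign_compose[of \<tau> "\<lambda>p. phi (ipv k p) t"] by simp

lemma TS_sym: "TS k (node n j) = TS j (node n k)"
proof -
  have "(\<Sum>\<sigma>\<in>perms. of_int (sign \<sigma>) * phi (ipv k \<sigma>) (node n j)) = (\<Sum>\<sigma>\<in>perms. of_int (sign \<sigma>) * phi j (perm_vec (node n k) \<sigma>))"
    by (rule sum.cong) (auto simp: phi_node_sym[of "ipv k _"] node_ipv)
  then have "- (\<Sum>\<sigma>\<in>perms. of_int (sign \<sigma>) * phi (ipv k \<sigma>) (node n j)) / 24 = TS j (node n k)"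
    by (simp add: TS_def Pminus_def)
  then show ?thesis using TS_alt[of k "node n j"] by simp
qed

lemma perm_vec_transpose: "t $ a = t $ b \<Longrightarrow> perm_vec t (Transposition.transpose a b) = t"
  by (simp add: vec_eq_iff Transposition.transpose_def)

lemma ipv_transpose: "t $ a = t $ b \<Longrightarrow> ipv t (Transposition.transpose a b) = t"
  by (simp add: vec_eq_iff Transposition.transpose_def)

lemma transpose_permutes: "Transposition.transpose a b permutes (UNIV::4 set)"
  by (simp add: permutes_swap_id)

lemma TS_zero_t: "a \<noteq> b \<Longrightarrow> t $ a = t $ b \<Longrightarrow> TS k t = 0"
  using TS_perm_t[OF transpose_permutes[of a b], of k t] by (simp add: perm_vec_transpose sign_swap_id)

lemma TS_zero_k: "a \<noteq> b \<Longrightarrow> k $ a = k $ b \<Longrightarrow> TS k t = 0"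
  using TS_perm_k[OF transpose_permutes[of a b], of k t] by (simp add: ipv_transpose sign_swap_id)

definition U :: "nat \<Rightarrow> (int^4) set" where
  "U n = {k \<in> Hlat. \<forall>a b. k$a - k$b < 4 * int n}"

definition dec :: "int^4 \<Rightarrow> bool" where
  "dec k \<longleftrightarrow> k$4 < k$3 \<and> k$3 < k$2 \<and> k$2 < k$1"

lemma Lambda_U: "Lambda n \<subseteq> U n"
  unfolding Lambda_def U_def forall_4 by auto

lemma U_ipv: "k \<in> U n \<Longrightarrow> \<sigma> permutes UNIV \<Longrightarrow> ipv k \<sigma> \<in> U n"
  unfolding U_def by (auto simp: Hlat_ipv)

lemma Lambda_iff:
  assumes "k \<in> U n" shows "k \<in> Lambda n \<longleftrightarrow> dec k"
proof -
  from assms have "k$1 - k$4 < 4 * int n" "k \<in> Hlat" unfolding U_def by auto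
  then show ?thesis by (auto simp: Lambda_def dec_def)
qed

lemma Collect4: "{l::4. P l} = (if P 1 then {1} else {}) \<union> (if P 2 then {2} else {}) \<union> (if P 3 then {3} else {}) \<union> (if P 4 then {4} else {})"
  apply (rule set_eqI)
  subgoal for x using exhaust_4[of x] by auto
  done

lemma finite_box: "finite {k::int^4. \<forall>i. a \<le> k$i \<and> k$i \<le> b}"
proof -
  have "{k::int^4. \<forall>i. a \<le> k$i \<and> k$i \<le> b} \<subseteq> (\<lambda>f. \<chi> i. f i) ` (PiE UNIV (\<lambda>_. {a..b}))"
  proof
    fix k :: "int^4" assume "k \<in> {k. \<forall>i. a \<le> k$i \<and> k$i \<le> b}"
    then have "(\<lambda>i. k$i) \<in> PiE UNIV (\<lambda>_. {a..b})" by auto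
    moreover have "k = (\<chi> i. (\<lambda>i. k$i) i)" by simp
    ultimately show "k \<in> (\<lambda>f. \<chi> i. f i) ` (PiE UNIV (\<lambda>_. {a..b}))" by blast
  qed
  moreover have "finite (PiE (UNIV::4 set) (\<lambda>_. {a..b}))" by (rule finite_PiE) auto
  ultimately show ?thesis using finite_subset by blast
qed

lemma finite_U: "finite (U n)"
proof -
  have "U n \<subseteq> {k::int^4. \<forall>i. -4 * int n \<le> k$i \<and> k$i \<le> 4 * int n}"
  proof
    fix k assume "k \<in> U n"
    then have s: "k$1 + k$2 + k$3 + k$4 = 0" and d: "\<forall>a b. k$a - k$b < 4 * int n"
      unfolding U_def Hlat_iff sum_4 by auto
    from d have "k$1 - k$2 < 4 * int n" "k$1 - k$3 < 4 * int n" "k$1 - k$4 < 4 * int n"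
      "k$2 - k$1 < 4 * int n" "k$2 - k$3 < 4 * int n" "k$2 - k$4 < 4 * int n"
      "k$3 - k$1 < 4 * int n" "k$3 - k$2 < 4 * int n" "k$3 - k$4 < 4 * int n"
      "k$4 - k$1 < 4 * int n" "k$4 - k$2 < 4 * int n" "k$4 - k$3 < 4 * int n" by auto
    with s show "k \<in> {k::int^4. \<forall>i. -4 * int n \<le> k$i \<and> k$i \<le> 4 * int n}"
      unfolding forall_4 mem_Collect_eq by (intro conjI; linarith)
  qed
  then show ?thesis using finite_box finite_subset by blast
qed

definition rk :: "int^4 \<Rightarrow> 4 \<Rightarrow> nat" where
  "rk k i = card {l. k$l > k$i}"

lemma rk_perm:
  assumes p: "\<sigma> permutes UNIV"
  shows "rk (ipv k \<sigma>) i = rk k (\<sigma> i)"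
proof -
  have "\<sigma> ` {l. k$(\<sigma> l) > k$(\<sigma> i)} = {l. k$l > k$(\<sigma> i)}"
  proof (rule set_eqI)
    fix x show "x \<in> \<sigma> ` {l. k$(\<sigma> l) > k$(\<sigma> i)} \<longleftrightarrow> x \<in> {l. k$l > k$(\<sigma> i)}"
    proof
      assume "x \<in> {l. k$l > k$(\<sigma> i)}"
      then show "x \<in> \<sigma> ` {l. k$(\<sigma> l) > k$(\<sigma> i)}"
        by (intro image_eqI[of _ _ "inv \<sigma> x"]) (auto simp: permutes_inverses[OF p])
    qed auto
  qed
  moreover have "inj_on \<sigma> {l. k$(\<sigma> l) > k$(\<sigma> i)}"
    using permutes_inj[OF p] by (simp add: inj_on_def inj_def)
  ultimately show ?thesis unfolding rk_def using card_image by fastforce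
qed

lemma rk_dec:
  assumes "dec k"
  shows "rk k 1 = 0 \<and> rk k 2 = 1 \<and> rk k 3 = 2 \<and> rk k 4 = 3"
proof -
  have d: "k$4 < k$3" "k$3 < k$2" "k$2 < k$1" using assms unfolding dec_def by auto
  have "{l. k$l > k$1} = {}" using d by (subst Collect4) simp
  moreover have "{l. k$l > k$2} = {1}" using d by (subst Collect4) simp
  moreover have "{l. k$l > k$3} = {1,2}" using d by (subst Collect4) auto
  moreover have "{l. k$l > k$4} = {1,2,3}" using d by (subst Collect4) auto
  ultimately show ?thesis unfolding rk_def by simp
qed

lemma dec_unique:
  assumes p: "\<pi> permutes UNIV" and d1: "dec k" and d2: "dec (ipv k \<pi>)"
  shows "\<pi> = id"
proof -
  have r: "rk k (\<pi> i) = rk k i" for i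
    using rk_perm[OF p, of k i] rk_dec[OF d1] rk_dec[OF d2] exhaust_4[of i] by auto
  have inj: "rk k x = rk k y \<Longrightarrow> x = y" for x y
    using rk_dec[OF d1] exhaust_4[of x] exhaust_4[of y] by auto
  show ?thesis using inj[OF r] by (simp add: fun_eq_iff)
qed

definition pos :: "nat \<Rightarrow> 4" where "pos m = of_nat m + 1"

lemma rk_le3: "rk k i \<le> 3"
proof -
  have sub: "{l. k$l > k$i} \<subseteq> UNIV - {i}" by auto
  have "card {l. k$l > k$i} \<le> card (UNIV - {i::4})" using card_mono[OF _ sub] by simp
  also have "\<dots> = 3" by (simp add: card_Diff_singleton)
  finally show ?thesis unfolding rk_def .
qed

lemma rk_mono: "k$a \<le> k$b \<Longrightarrow> rk k b \<le> rk k a"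
  unfolding rk_def by (rule card_mono) auto

lemma rk_lt: assumes "rk k a < rk k b" shows "k$b < k$a"
proof (rule ccontr)
  assume "\<not> k$b < k$a"
  then have "k$a \<le> k$b" by simp
  then have "rk k b \<le> rk k a" by (rule rk_mono)
  then show False using assms by simp
qed

lemma rk_inj:
  assumes dist: "\<forall>a b. a \<noteq> b \<longrightarrow> k$a \<noteq> k$b"
  shows "inj (rk k)"
proof (rule injI)
  fix a b assume e: "rk k a = rk k b"
  show "a = b"
  proof (rule ccontr)
    assume ne: "a \<noteq> b"
    then have "k$a < k$b \<or> k$b < k$a" using dist by (meson linorder_neqE_linordered_idom)
    moreover have "k$a < k$b \<Longrightarrow> rk k b < rk k a"
      unfolding rk_def by (rule psubset_card_mono) auto
    moreover have "k$b < k$a \<Longrightarrow> rk k a < rk k b"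
      unfolding rk_def by (rule psubset_card_mono) auto
    ultimately show False using e by auto
  qed
qed

lemma pos_vals: "pos 0 = 1" "pos 1 = 2" "pos 2 = 3" "pos 3 = 4"
  unfolding pos_def by simp_all

lemma le3_cases: "m \<le> (3::nat) \<Longrightarrow> m = 0 \<or> m = 1 \<or> m = 2 \<or> m = 3" by auto

lemma pos_eq: "m \<le> 3 \<Longrightarrow> (pos m = 1 \<longleftrightarrow> m = 0) \<and> (pos m = 2 \<longleftrightarrow> m = 1) \<and> (pos m = 3 \<longleftrightarrow> m = 2) \<and> (pos m = 4 \<longleftrightarrow> m = 3)"
  using le3_cases[of m] pos_vals by auto

lemma sort_exists:
  assumes dist: "\<forall>a b. a \<noteq> b \<longrightarrow> k$a \<noteq> k$b"
  shows "\<exists>\<sigma>. \<sigma> permutes UNIV \<and> dec (ipv k \<sigma>)"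
proof -
  define \<rho> where "\<rho> = pos \<circ> rk k"
  have posinj: "m \<le> 3 \<Longrightarrow> m' \<le> 3 \<Longrightarrow> pos m = pos m' \<Longrightarrow> m = m'" for m m'
    using le3_cases[of m] le3_cases[of m'] pos_vals by auto
  have "inj \<rho>"
    using rk_inj[OF dist] rk_le3 posinj unfolding \<rho>_def inj_def by auto
  then have b: "bij \<rho>" using finite_UNIV_inj_surj[of \<rho>] by (simp add: bij_def)
  define \<sigma> where "\<sigma> = inv \<rho>"
  have bs: "bij \<sigma>" unfolding \<sigma>_def using b bij_imp_bij_inv by blast
  then have ps: "\<sigma> permutes UNIV" using bij_imp_permutes by blast
  have rs: "\<rho> (\<sigma> i) = i" for i unfolding \<sigma>_def using b by (simp add: bij_is_surj surj_f_inv_f)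
  have val: "pos (rk k (\<sigma> i)) = i" for i using rs[of i] unfolding \<rho>_def by simp
  have rkv: "rk k (\<sigma> 1) = 0" "rk k (\<sigma> 2) = 1" "rk k (\<sigma> 3) = 2" "rk k (\<sigma> 4) = 3"
    using pos_eq[OF rk_le3, of k "\<sigma> 1"] pos_eq[OF rk_le3, of k "\<sigma> 2"] pos_eq[OF rk_le3, of k "\<sigma> 3"]
      pos_eq[OF rk_le3, of k "\<sigma> 4"] val by auto
  have "dec (ipv k \<sigma>)" unfolding dec_def using rk_lt[of k] rkv by simp
  with ps show ?thesis by blast
qed

lemma sum_U_Lambda:
  fixes G :: "int^4 \<Rightarrow> 'a::comm_ring_1"
  assumes sym: "\<And>k \<sigma>. k \<in> U n \<Longrightarrow> \<sigma> permutes UNIV \<Longrightarrow> G (ipv k \<sigma>) = G k"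
    and rep: "\<And>k a b. k \<in> U n \<Longrightarrow> a \<noteq> b \<Longrightarrow> k$a = k$b \<Longrightarrow> G k = 0"
  shows "sum G (U n) = 24 * sum G (Lambda n)"
proof -
  have one: "G k = (\<Sum>\<sigma>\<in>perms. if ipv k \<sigma> \<in> Lambda n then G k else 0)" if k: "k \<in> U n" for k
  proof (cases "\<forall>a b. a \<noteq> b \<longrightarrow> k$a \<noteq> k$b")
    case True
    obtain \<sigma>0 where p0: "\<sigma>0 permutes UNIV" and d0: "dec (ipv k \<sigma>0)" using sort_exists[OF True] by blast
    have "{\<sigma>\<in>perms. ipv k \<sigma> \<in> Lambda n} = {\<sigma>0}"
    proof (rule set_eqI, rule iffI)
      fix \<sigma> assume "\<sigma> \<in> {\<sigma>\<in>perms. ipv k \<sigma> \<in> Lambda n}"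
      then have ps: "\<sigma> permutes UNIV" and "ipv k \<sigma> \<in> Lambda n" by auto
      then have ds: "dec (ipv k \<sigma>)" using Lambda_iff[OF U_ipv[OF k ps]] by simp
      have pc: "inv \<sigma>0 \<circ> \<sigma> permutes UNIV" using ps p0 by (simp add: permutes_compose permutes_inv)
      have cc: "\<sigma>0 \<circ> (inv \<sigma>0 \<circ> \<sigma>) = \<sigma>" by (simp only: o_assoc permutes_inv_o(1)[OF p0] id_comp)
      then have "ipv (ipv k \<sigma>0) (inv \<sigma>0 \<circ> \<sigma>) = ipv k \<sigma>"
        unfolding ipv_comp by simp
      then have "inv \<sigma>0 \<circ> \<sigma> = id" using dec_unique[OF pc d0] ds by simp
      then have "\<sigma> = \<sigma>0" using cc by simp
      then show "\<sigma> \<in> {\<sigma>0}" by simp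
    next
      fix \<sigma> assume "\<sigma> \<in> {\<sigma>0}"
      then show "\<sigma> \<in> {\<sigma>\<in>perms. ipv k \<sigma> \<in> Lambda n}"
        using p0 d0 Lambda_iff[OF U_ipv[OF k p0]] by auto
    qed
    then have "(\<Sum>\<sigma>\<in>perms. if ipv k \<sigma> \<in> Lambda n then G k else 0) = (\<Sum>\<sigma>\<in>{\<sigma>0}. G k)"
      by (simp add: sum.inter_filter[OF finite_perms, symmetric])
    then show ?thesis by simp
  next
    case False
    then have g0: "G k = 0" using rep[OF k] by blast
    have "(\<Sum>\<sigma>\<in>perms. if ipv k \<sigma> \<in> Lambda n then G k else 0) = (\<Sum>\<sigma>\<in>perms. 0)"
      by (rule sum.cong) (simp_all add: g0)
    then show ?thesis using g0 by simp
  qed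
  have "sum G (U n) = (\<Sum>k\<in>U n. \<Sum>\<sigma>\<in>perms. if ipv k \<sigma> \<in> Lambda n then G k else 0)"
    using one by (rule sum.cong[OF refl])
  also have "\<dots> = (\<Sum>\<sigma>\<in>perms. \<Sum>k\<in>U n. if ipv k \<sigma> \<in> Lambda n then G k else 0)"
    by (rule sum.swap)
  also have "\<dots> = (\<Sum>\<sigma>\<in>perms. sum G (Lambda n))"
  proof (rule sum.cong[OF refl])
    fix \<sigma> assume "\<sigma> \<in> perms"
    then have p: "\<sigma> permutes UNIV" by simp
    have pi: "inv \<sigma> permutes UNIV" using p by (simp add: permutes_inv)
    have set: "{k\<in>U n. ipv k \<sigma> \<in> Lambda n} = (\<lambda>k. ipv k (inv \<sigma>)) ` Lambda n"
    proof (rule set_eqI, rule iffI)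
      fix k assume "k \<in> {k\<in>U n. ipv k \<sigma> \<in> Lambda n}"
      then have "ipv k \<sigma> \<in> Lambda n" by simp
      moreover have "k = ipv (ipv k \<sigma>) (inv \<sigma>)"
        unfolding ipv_comp permutes_inv_o(1)[OF p] by simp
      ultimately show "k \<in> (\<lambda>k. ipv k (inv \<sigma>)) ` Lambda n" by blast
    next
      fix k assume "k \<in> (\<lambda>k. ipv k (inv \<sigma>)) ` Lambda n"
      then obtain k' where k': "k' \<in> Lambda n" and kk: "k = ipv k' (inv \<sigma>)" by blast
      have "ipv k \<sigma> = k'" unfolding kk ipv_comp permutes_inv_o(2)[OF p] by simp
      then show "k \<in> {k\<in>U n. ipv k \<sigma> \<in> Lambda n}"
        using k' kk U_ipv[OF _ pi] Lambda_U by auto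
    qed
    have inj: "inj_on (\<lambda>k. ipv k (inv \<sigma>)) (Lambda n)"
    proof (rule inj_onI)
      fix x y assume "ipv x (inv \<sigma>) = ipv y (inv \<sigma>)"
      then have "ipv (ipv x (inv \<sigma>)) \<sigma> = ipv (ipv y (inv \<sigma>)) \<sigma>" by simp
      then show "x = y" unfolding ipv_comp permutes_inv_o(2)[OF p] by simp
    qed
    have "(\<Sum>k\<in>U n. if ipv k \<sigma> \<in> Lambda n then G k else 0) = sum G {k\<in>U n. ipv k \<sigma> \<in> Lambda n}"
      by (simp add: sum.inter_filter[OF finite_U])
    also have "\<dots> = sum (G \<circ> (\<lambda>k. ipv k (inv \<sigma>))) (Lambda n)"
      unfolding set by (rule sum.reindex[OF inj])
    also have "\<dots> = sum G (Lambda n)"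
      by (rule sum.cong) (use sym pi Lambda_U in auto)
    finally show "(\<Sum>k\<in>U n. if ipv k \<sigma> \<in> Lambda n then G k else 0) = sum G (Lambda n)" .
  qed
  also have "\<dots> = 24 * sum G (Lambda n)" by (simp add: card_perms)
  finally show ?thesis .
qed

definition cong4 :: "nat \<Rightarrow> int^4 \<Rightarrow> int^4 \<Rightarrow> bool" where
  "cong4 n j j' \<longleftrightarrow> (\<forall>i. (4 * int n) dvd (j$i - j'$i))"

definition reg :: "nat \<Rightarrow> int^4 \<Rightarrow> bool" where
  "reg n j \<longleftrightarrow> (\<forall>a b. a \<noteq> b \<longrightarrow> \<not> (4 * int n) dvd (j$a - j$b))"

definition Dset :: "nat \<Rightarrow> (int^4) set" where
  "Dset n = {j \<in> Hlat. 0 \<le> j$1 \<and> j$1 < 4 * int n \<and> 0 \<le> j$2 \<and> j$2 < 4 * int n \<and> 0 \<le> j$3 \<and> j$3 < 4 * int n}"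

lemma cong4_sym: "cong4 n j j' \<Longrightarrow> cong4 n j' j"
  unfolding cong4_def by (metis dvd_diff_commute)

lemma cong4_trans: "cong4 n j j' \<Longrightarrow> cong4 n j' j'' \<Longrightarrow> cong4 n j j''"
  unfolding cong4_def
proof (intro allI)
  fix i assume A: "\<forall>i. 4 * int n dvd j $ i - j' $ i" and B: "\<forall>i. 4 * int n dvd j' $ i - j'' $ i"
  have "4 * int n dvd (j $ i - j' $ i) + (j' $ i - j'' $ i)" using dvd_add[OF spec[OF A, of i] spec[OF B, of i]] .
  then show "4 * int n dvd j $ i - j'' $ i" by simp
qed

lemma cong4_refl: "cong4 n j j" unfolding cong4_def by simp

lemma cong_Hlat:
  assumes "j \<in> Hlat" "cong4 n j j'" "(\<Sum>i\<in>UNIV. j'$i) = 0"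
  shows "j' \<in> Hlat"
proof -
  have m: "j'$a mod 4 = j$a mod 4" for a
  proof -
    have "4 dvd (4 * int n)" by simp
    moreover have "4 * int n dvd j$a - j'$a" using assms(2) unfolding cong4_def by auto
    ultimately have "4 dvd j$a - j'$a" by (rule dvd_trans)
    then show ?thesis by (metis mod_eq_dvd_iff)
  qed
  show ?thesis using assms(1,3) unfolding Hlat_iff by (simp add: m)
qed

lemma reg_cong:
  assumes "cong4 n j j'" "reg n j" shows "reg n j'"
  unfolding reg_def
proof (intro allI impI notI)
  fix a b assume ab: "a \<noteq> b" and d: "4 * int n dvd j'$a - j'$b"
  have c1: "4 * int n dvd (j$a - j'$a)" and c2: "4 * int n dvd (j$b - j'$b)" using assms(1) unfolding cong4_def by auto
  have "4 * int n dvd (j'$a - j'$b) + (j$a - j'$a) - (j$b - j'$b)"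
    using dvd_diff[OF dvd_add[OF d c1] c2] .
  then have "4 * int n dvd j$a - j$b" by (simp add: algebra_simps)
  then show False using assms(2) ab unfolding reg_def by auto
qed

lemma U_inj:
  assumes n: "n \<ge> 1" and u: "j \<in> U n" "j' \<in> U n" and c: "cong4 n j j'"
  shows "j = j'"
proof -
  define N where "N = 4 * int n"
  have Np: "N > 0" using n unfolding N_def by simp
  define v where "v i = (j$i - j'$i) div N" for i
  have jv: "j$i - j'$i = N * v i" for i
    using c unfolding cong4_def v_def N_def by simp
  have dj: "j$a - j$b < N" "j'$a - j'$b < N" for a b using u unfolding U_def N_def by auto
  have vd: "v a - v b \<le> 1" for a b
  proof -
    have "N * (v a - v b) = (j$a - j$b) - (j'$a - j'$b)" using jv[of a] jv[of b] by (simp add: algebra_simps)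
    also have "\<dots> < N * 2" using dj[of a b] dj[of b a] by simp
    finally have "v a - v b < 2" using Np by (simp add: mult_less_cancel_left_pos)
    then show ?thesis by simp
  qed
  have s: "(\<Sum>i\<in>UNIV. j$i) = 0" "(\<Sum>i\<in>UNIV. j'$i) = 0" using u unfolding U_def Hlat_iff by auto
  have "N * (v 1 + v 2 + v 3 + v 4) = (\<Sum>i\<in>UNIV. j$i) - (\<Sum>i\<in>UNIV. j'$i)"
    unfolding sum_4 using jv[of 1] jv[of 2] jv[of 3] jv[of 4] by (simp add: algebra_simps)
  then have "v 1 + v 2 + v 3 + v 4 = 0" using s Np by simp
  moreover note vd[of 1 2] vd[of 1 3] vd[of 1 4] vd[of 2 1] vd[of 2 3] vd[of 2 4]
    vd[of 3 1] vd[of 3 2] vd[of 3 4] vd[of 4 1] vd[of 4 2] vd[of 4 3]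
  ultimately have "v 1 = 0" "v 2 = 0" "v 3 = 0" "v 4 = 0" by linarith+
  then have "v i = 0" for i using exhaust_4[of i] by auto
  then show ?thesis using jv by (simp add: vec_eq_iff)
qed

lemma U_exists:
  assumes n: "n \<ge> 1" and j: "j \<in> Hlat" and r: "reg n j"
  shows "\<exists>u\<in>U n. cong4 n u j"
proof -
  define N where "N = 4 * int n"
  have Np: "N > 0" using n unfolding N_def by simp
  define m where "m u = nat (\<Sum>i\<in>UNIV. (u$i)^2)" for u :: "int^4"
  have "j \<in> Hlat \<and> cong4 n j j" using j cong4_refl by simp
  then obtain u where uC: "u \<in> Hlat \<and> cong4 n u j" and umin: "\<forall>y. y \<in> Hlat \<and> cong4 n y j \<longrightarrow> m u \<le> m y"
    using ex_has_least_nat[of "\<lambda>u. u \<in> Hlat \<and> cong4 n u j" j m] by blast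
  have "u \<in> U n"
  proof (rule ccontr)
    assume "u \<notin> U n"
    then obtain a b where ab: "\<not> u$a - u$b < N" using uC unfolding U_def N_def by auto
    have ne: "u$a - u$b \<noteq> N"
    proof
      assume e: "u$a - u$b = N"
      then have "a \<noteq> b" using Np by auto
      moreover have "N dvd u$a - u$b" using e by simp
      moreover have "reg n u" using reg_cong[OF cong4_sym r] uC by simp
      ultimately show False unfolding reg_def N_def by auto
    qed
    with ab have gt: "u$a - u$b > N" by simp
    then have anb: "a \<noteq> b" using Np by auto
    define u' where "u' = (\<chi> i. u$i + (if i = b then N else 0) - (if i = a then N else 0))"
    have u'i: "u'$i = u$i + (if i = b then N else 0) - (if i = a then N else 0)" for i
      unfolding u'_def by simp
    have cu: "cong4 n u u'" unfolding cong4_def N_def u'i by auto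
    have su: "(\<Sum>i\<in>UNIV. u'$i) = (\<Sum>i\<in>UNIV. u$i)"
      unfolding u'i by (simp add: sum.distrib sum_subtractf)
    have u'H: "u' \<in> Hlat" using cong_Hlat[OF _ cu] su uC unfolding Hlat_iff by auto
    have u'c: "cong4 n u' j" using cong4_trans[OF cong4_sym[OF cu]] uC by blast
    have fi: "(u'$i)^2 = (u$i)^2 + (if i = a then N^2 - 2*N*u$a else 0) + (if i = b then N^2 + 2*N*u$b else 0)" for i
      unfolding u'i using anb by (auto simp: power2_eq_square algebra_simps)
    have sq: "(\<Sum>i\<in>UNIV. (u'$i)^2) = (\<Sum>i\<in>UNIV. (u$i)^2) + (N^2 - 2*N*u$a) + (N^2 + 2*N*u$b)"
      unfolding fi by (simp add: sum.distrib)
    have "N * N < N * (u$a - u$b)" using gt Np by (simp add: mult_strict_left_mono)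
    then have "(\<Sum>i\<in>UNIV. (u'$i)^2) < (\<Sum>i\<in>UNIV. (u$i)^2)"
      unfolding sq by (simp add: power2_eq_square algebra_simps)
    moreover have "0 \<le> (\<Sum>i\<in>UNIV. (u'$i)^2)" by (simp add: sum_nonneg)
    ultimately have "m u' < m u" unfolding m_def by simp
    with umin u'H u'c show False by force
  qed
  with uC show ?thesis by blast
qed

lemma D_unique:
  assumes "d \<in> Dset n" "d' \<in> Dset n" "cong4 n d d'"
  shows "d = d'"
proof -
  have c: "4 * int n dvd d$i - d'$i" for i using assms(3) unfolding cong4_def by auto
  have b: "0 \<le> d$i \<and> d$i < 4 * int n \<and> 0 \<le> d'$i \<and> d'$i < 4 * int n" if "i \<in> {1,2,3}" for i
    using assms(1,2) that unfolding Dset_def by auto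
  have e: "d$i = d'$i" if "i \<in> {1,2,3}" for i
  proof -
    have "\<bar>d$i - d'$i\<bar> < 4 * int n" using b[OF that] by auto
    moreover have "d$i - d'$i = 0 \<or> \<bar>4 * int n\<bar> \<le> \<bar>d$i - d'$i\<bar>"
      using c[of i] dvd_imp_le_int[of "d$i - d'$i" "4 * int n"] by blast
    ultimately show ?thesis by auto
  qed
  have s: "d$1 + d$2 + d$3 + d$4 = 0" "d'$1 + d'$2 + d'$3 + d'$4 = 0"
    using assms(1,2) unfolding Dset_def Hlat_iff sum_4 by auto
  have "d$4 = d'$4" using s e[of 1] e[of 2] e[of 3] by simp
  then have "d$i = d'$i" for i using e[of 1] e[of 2] e[of 3] exhaust_4[of i] by auto
  then show ?thesis by (simp add: vec_eq_iff)
qed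

definition rho :: "nat \<Rightarrow> int^4 \<Rightarrow> int^4" where
  "rho n j = (\<chi> i. if i = 4 then - (j$1 mod (4 * int n) + j$2 mod (4 * int n) + j$3 mod (4 * int n))
                   else j$i mod (4 * int n))"

lemma rho_cong: assumes "j \<in> Hlat" shows "cong4 n (rho n j) j"
  unfolding cong4_def
proof
  fix i :: 4
  define N where "N = 4 * int n"
  have m: "N dvd x mod N - x" for x :: int by (metis dvd_minus_mod dvd_minus_iff minus_diff_eq)
  have m': "N dvd x - x mod N" for x :: int by (rule dvd_minus_mod)
  have s: "j$4 = - (j$1 + j$2 + j$3)" using assms unfolding Hlat_iff sum_4 by simp
  show "4 * int n dvd rho n j $ i - j $ i"
  proof (cases "i = 4")
    case True
    have "rho n j $ i - j $ i = (j$1 - j$1 mod N) + (j$2 - j$2 mod N) + (j$3 - j$3 mod N)"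
      using True s unfolding rho_def N_def by simp
    then show ?thesis using dvd_add[OF dvd_add[OF m'[of "j$1"] m'[of "j$2"]] m'[of "j$3"]] unfolding N_def by simp
  next
    case False
    then show ?thesis using m unfolding rho_def N_def by simp
  qed
qed

lemma rho_Hlat: "j \<in> Hlat \<Longrightarrow> rho n j \<in> Hlat"
  by (rule cong_Hlat[OF _ cong4_sym[OF rho_cong]]) (auto simp: rho_def sum_4)

lemma rho_D: assumes "n \<ge> 1" "j \<in> Hlat" shows "rho n j \<in> Dset n"
  using assms rho_Hlat[OF assms(2)] unfolding Dset_def by (simp add: rho_def)

lemma finite_D: "finite (Dset n)"
proof -
  have "Dset n \<subseteq> {k::int^4. \<forall>i. -12 * int n \<le> k$i \<and> k$i \<le> 4 * int n}"
  proof
    fix k assume "k \<in> Dset n"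
    then have "k$1 + k$2 + k$3 + k$4 = 0" "0 \<le> k$1 \<and> k$1 < 4 * int n \<and> 0 \<le> k$2 \<and> k$2 < 4 * int n \<and> 0 \<le> k$3 \<and> k$3 < 4 * int n"
      unfolding Dset_def Hlat_iff sum_4 by auto
    then show "k \<in> {k::int^4. \<forall>i. -12 * int n \<le> k$i \<and> k$i \<le> 4 * int n}"
      unfolding forall_4 mem_Collect_eq by (intro conjI; linarith)
  qed
  then show ?thesis using finite_box finite_subset by blast
qed

lemma sum_D_U:
  fixes G :: "int^4 \<Rightarrow> 'a::comm_ring_1"
  assumes n: "n \<ge> 1"
    and per: "\<And>j j'. j \<in> Hlat \<Longrightarrow> j' \<in> Hlat \<Longrightarrow> cong4 n j j' \<Longrightarrow> G j = G j'"
    and van: "\<And>j. j \<in> Hlat \<Longrightarrow> \<not> reg n j \<Longrightarrow> G j = 0"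
  shows "sum G (Dset n) = sum G (U n)"
proof -
  have UH: "U n \<subseteq> Hlat" unfolding U_def by auto
  have DH: "Dset n \<subseteq> Hlat" unfolding Dset_def by auto
  have r1: "sum G A = sum G {x\<in>A. reg n x}" if "finite A" "A \<subseteq> Hlat" for A
  proof -
    have "sum G A = (\<Sum>x\<in>A. if reg n x then G x else 0)"
      by (rule sum.cong) (use van that in auto)
    also have "\<dots> = sum G {x\<in>A. reg n x}" by (simp add: sum.inter_filter[OF that(1)])
    finally show ?thesis .
  qed
  have bij: "bij_betw (rho n) {j\<in>U n. reg n j} {d\<in>Dset n. reg n d}"
  proof (rule bij_betw_imageI)
    show "inj_on (rho n) {j\<in>U n. reg n j}"
    proof (rule inj_onI)
      fix x y assume x: "x \<in> {j\<in>U n. reg n j}" and y: "y \<in> {j\<in>U n. reg n j}" and e: "rho n x = rho n y"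
      have xH: "x \<in> Hlat" and yH: "y \<in> Hlat" using x y UH by auto
      have "cong4 n x (rho n y)" using cong4_sym[OF rho_cong[OF xH, where n=n]] e by simp
      then have "cong4 n x y" using cong4_trans[OF _ rho_cong[OF yH, where n=n]] by blast
      then show "x = y" using U_inj[OF n] x y by auto
    qed
    show "rho n ` {j\<in>U n. reg n j} = {d\<in>Dset n. reg n d}"
    proof (rule set_eqI, rule iffI)
      fix d assume "d \<in> rho n ` {j\<in>U n. reg n j}"
      then obtain j where j: "j \<in> U n" "reg n j" and dj: "d = rho n j" by blast
      have "d \<in> Dset n" using rho_D[OF n] j UH dj by auto
      moreover have "reg n d" using reg_cong[OF cong4_sym[OF rho_cong] j(2)] j UH dj by auto
      ultimately show "d \<in> {d\<in>Dset n. reg n d}" by simp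
    next
      fix d assume d: "d \<in> {d\<in>Dset n. reg n d}"
      then obtain u where u: "u \<in> U n" and cu: "cong4 n u d" using U_exists[OF n] DH by blast
      have ru: "reg n u" using reg_cong[OF cong4_sym[OF cu]] d by auto
      have c3: "cong4 n (rho n u) d" using cong4_trans[OF rho_cong cu] u UH by auto
      have c4: "rho n u \<in> Dset n" using rho_D[OF n] u UH by auto
      have c5: "d \<in> Dset n" using d by simp
      have "rho n u = d" by (rule D_unique[OF c4 c5 c3])
      then show "d \<in> rho n ` {j\<in>U n. reg n j}" using u ru by auto
    qed
  qed
  have "sum G (Dset n) = sum G {d\<in>Dset n. reg n d}" using r1 finite_D DH by blast
  also have "\<dots> = sum (\<lambda>j. G (rho n j)) {j\<in>U n. reg n j}"
    by (rule sum.reindex_bij_betw[OF bij, symmetric])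
  also have "\<dots> = sum G {j\<in>U n. reg n j}"
    by (rule sum.cong) (use per rho_Hlat rho_cong UH in auto)
  also have "\<dots> = sum G (U n)" using r1 finite_U UH by metis
  finally show ?thesis .
qed

definition om :: "int \<Rightarrow> nat \<Rightarrow> complex" where
  "om c q = exp (2 * of_real pi * \<i> * of_int c / of_nat q)"

lemma om_pow_q: "q > 0 \<Longrightarrow> om c q ^ q = 1"
proof -
  assume q: "q > 0"
  have "om c q ^ q = exp (of_nat q * (2 * of_real pi * \<i> * of_int c / of_nat q))"
    unfolding om_def by (rule exp_of_nat_mult[symmetric])
  also have "of_nat q * (2 * of_real pi * \<i> * of_int c / of_nat q) = \<i> * (of_int c * (of_real pi * 2))"
    using q by (simp add: field_simps)
  also have "exp \<dots> = 1" by (rule exp_2pi_1_int)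
  finally show ?thesis .
qed

lemma om_eq_1: assumes q: "q > 0" shows "om c q = 1 \<longleftrightarrow> int q dvd c"
proof
  assume "int q dvd c"
  then obtain t where t: "c = int q * t" by (auto simp: dvd_def)
  have "2 * of_real pi * \<i> * of_int c / of_nat q = \<i> * (of_int t * (of_real pi * 2))"
    using q unfolding t by (simp add: field_simps)
  then show "om c q = 1" unfolding om_def by simp
next
  assume "om c q = 1"
  then obtain k :: int where k: "Im (2 * of_real pi * \<i> * of_int c / of_nat q) = of_int (2 * k) * pi"
    unfolding om_def exp_eq_1 by blast
  have "Im (2 * of_real pi * \<i> * of_int c / of_nat q) = 2 * pi * of_int c / of_nat q"
    by (simp add: Im_divide_of_nat)
  with k have "2 * pi * of_int c / of_nat q = of_int (2 * k) * pi" by simp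
  then have "real_of_int c = real q * of_int k" using q pi_gt_zero by (simp add: field_simps)
  then have "c = int q * k" by (metis of_int_eq_iff of_int_mult of_int_of_nat_eq)
  then show "int q dvd c" by simp
qed

lemma geo_sum: assumes q: "q > 0" shows "(\<Sum>b<q. om c q ^ b) = (if int q dvd c then of_nat q else 0)"
proof (cases "int q dvd c")
  case True
  then have "om c q = 1" using om_eq_1[OF q] by simp
  then show ?thesis using True by simp
next
  case False
  then have "om c q \<noteq> 1" using om_eq_1[OF q] by simp
  then show ?thesis using False by (simp add: sum_gp_strict om_pow_q[OF q])
qed

lemma sum_prod_split:
  fixes f :: "'a \<Rightarrow> 'c::comm_semiring_0"
  assumes "finite S" "finite T"
  shows "(\<Sum>(x,y)\<in>S \<times> T. f x * g y) = sum f S * sum g T"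
  by (simp add: sum_product sum.cartesian_product)

definition mk :: "nat \<times> nat \<times> nat \<times> nat \<Rightarrow> int^4" where
  "mk x = (case x of (r, b1, b2, b3) \<Rightarrow>
     (\<chi> i. if i = 1 then int r + 4 * int b1 else if i = 2 then int r + 4 * int b2
           else if i = 3 then int r + 4 * int b3 else - (3 * int r + 4 * (int b1 + int b2 + int b3))))"

lemma mk_nth: "mk (r, b1, b2, b3) $ 1 = int r + 4 * int b1" "mk (r, b1, b2, b3) $ 2 = int r + 4 * int b2"
  "mk (r, b1, b2, b3) $ 3 = int r + 4 * int b3" "mk (r, b1, b2, b3) $ 4 = - (3 * int r + 4 * (int b1 + int b2 + int b3))"
  unfolding mk_def by simp_all

definition Pset :: "nat \<Rightarrow> (nat \<times> nat \<times> nat \<times> nat) set" where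
  "Pset n = {..<4} \<times> {..<n} \<times> {..<n} \<times> {..<n}"

lemma mk_Hlat: "mk (r, b1, b2, b3) \<in> Hlat"
  unfolding Hlat_def sum_4 mem_Collect_eq mk_nth by presburger

lemma bij_mk: "bij_betw mk (Pset n) (Dset n)"
proof (rule bij_betw_imageI)
  show "inj_on mk (Pset n)"
  proof (rule inj_onI)
    fix x y assume x: "x \<in> Pset n" and y: "y \<in> Pset n" and e: "mk x = mk y"
    obtain r b1 b2 b3 where xx: "x = (r, b1, b2, b3)" by (cases x) auto
    obtain r' b1' b2' b3' where yy: "y = (r', b1', b2', b3')" by (cases y) auto
    have "r < 4" "r' < 4" using x y xx yy unfolding Pset_def by auto
    moreover have "mk x $ 1 = mk y $ 1" "mk x $ 2 = mk y $ 2" "mk x $ 3 = mk y $ 3" using e by auto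
    ultimately have "r = r' \<and> b1 = b1' \<and> b2 = b2' \<and> b3 = b3'" unfolding xx yy mk_nth by presburger
    then show "x = y" using xx yy by simp
  qed
  show "mk ` Pset n = Dset n"
  proof (rule set_eqI, rule iffI)
    fix j assume "j \<in> mk ` Pset n"
    then obtain r b1 b2 b3 where j: "j = mk (r, b1, b2, b3)" and p: "r < 4" "b1 < n" "b2 < n" "b3 < n"
      unfolding Pset_def by auto
    then show "j \<in> Dset n" unfolding Dset_def using mk_Hlat[of r b1 b2 b3] by (simp add: mk_nth)
  next
    fix j assume jD: "j \<in> Dset n"
    then have H: "j \<in> Hlat" and bd: "0 \<le> j$1" "j$1 < 4 * int n" "0 \<le> j$2" "j$2 < 4 * int n" "0 \<le> j$3" "j$3 < 4 * int n"
      unfolding Dset_def by auto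
    then have s: "j$1 + j$2 + j$3 + j$4 = 0" and md: "j$1 mod 4 = j$2 mod 4" "j$2 mod 4 = j$3 mod 4"
      unfolding Hlat_def sum_4 by auto
    define r where "r = nat (j$1 mod 4)"
    define b1 where "b1 = nat (j$1 div 4)"
    define b2 where "b2 = nat (j$2 div 4)"
    define b3 where "b3 = nat (j$3 div 4)"
    have ri: "int r = j$1 mod 4" "int r = j$2 mod 4" "int r = j$3 mod 4" unfolding r_def using md by simp_all
    have bi: "int b1 = j$1 div 4" "int b2 = j$2 div 4" "int b3 = j$3 div 4"
      unfolding b1_def b2_def b3_def using bd by simp_all
    have e1: "int r + 4 * int b1 = j$1" unfolding ri(1) bi(1) by presburger
    have e2: "int r + 4 * int b2 = j$2" unfolding ri(2) bi(2) by presburger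
    have e3: "int r + 4 * int b3 = j$3" unfolding ri(3) bi(3) by presburger
    have "mk (r, b1, b2, b3) = j"
    proof -
      have "mk (r, b1, b2, b3) $ i = j $ i" for i
        using exhaust_4[of i] e1 e2 e3 s unfolding mk_nth by (auto simp: mk_nth)
      then show ?thesis by (simp add: vec_eq_iff)
    qed
    moreover have "(r, b1, b2, b3) \<in> Pset n"
      unfolding Pset_def r_def b1_def b2_def b3_def using bd by auto
    ultimately show "j \<in> mk ` Pset n" by (metis imageI)
  qed
qed

lemma phi_node: "phi m (node n j) = exp (of_real (pi / 2) * \<i> * (of_int (\<Sum>i\<in>UNIV. m$i * j$i) / of_nat (4 * n)))"
proof -
  have "(\<Sum>i\<in>UNIV. real_of_int (m$i) * node n j $ i) = real_of_int (\<Sum>i\<in>UNIV. m$i * j$i) / (4 * real n)"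
    unfolding node_def by (simp add: sum_divide_distrib)
  then show ?thesis unfolding phi_def by simp
qed

lemma phi_mk:
  assumes n: "n > 0" and m: "m$1 + m$2 + m$3 + m$4 = 0"
    and mu: "m$1 = m$4 + 4 * \<mu>1" "m$2 = m$4 + 4 * \<mu>2" "m$3 = m$4 + 4 * \<mu>3"
  shows "phi m (node n (mk (r, b1, b2, b3))) = om (- m$4) (4 * n) ^ r * om \<mu>1 n ^ b1 * om \<mu>2 n ^ b2 * om \<mu>3 n ^ b3"
proof -
  have m4: "m$4 = - (\<mu>1 + \<mu>2 + \<mu>3)" using m mu by simp
  have S: "(\<Sum>i\<in>UNIV. m$i * mk (r, b1, b2, b3) $ i) = - 4 * m$4 * int r + 16 * (\<mu>1 * int b1 + \<mu>2 * int b2 + \<mu>3 * int b3)"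
    unfolding sum_4 mk_nth mu m4 by (simp add: algebra_simps)
  have "of_real (pi / 2) * \<i> * (of_int (\<Sum>i\<in>UNIV. m$i * mk (r, b1, b2, b3) $ i) / of_nat (4 * n))
      = of_nat r * (2 * of_real pi * \<i> * of_int (- m$4) / of_nat (4 * n))
        + of_nat b1 * (2 * of_real pi * \<i> * of_int \<mu>1 / of_nat n)
        + of_nat b2 * (2 * of_real pi * \<i> * of_int \<mu>2 / of_nat n)
        + of_nat b3 * (2 * of_real pi * \<i> * of_int \<mu>3 / of_nat n)"
    unfolding S using n by (simp add: field_simps)
  moreover have "exp (of_nat r * (2 * of_real pi * \<i> * of_int (- m$4) / of_nat (4 * n))
        + of_nat b1 * (2 * of_real pi * \<i> * of_int \<mu>1 / of_nat n)
        + of_nat b2 * (2 * of_real pi * \<i> * of_int \<mu>2 / of_nat n)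
        + of_nat b3 * (2 * of_real pi * \<i> * of_int \<mu>3 / of_nat n))
      = om (- m$4) (4 * n) ^ r * om \<mu>1 n ^ b1 * om \<mu>2 n ^ b2 * om \<mu>3 n ^ b3"
    unfolding om_def exp_add exp_of_nat_mult ..
  ultimately show ?thesis unfolding phi_node by simp
qed

lemma sum4_split:
  fixes f g1 g2 g3 :: "nat \<Rightarrow> complex"
  assumes "finite A" "finite B" "finite C" "finite D"
  shows "(\<Sum>x\<in>A \<times> B \<times> C \<times> D. (case x of (r, b1, b2, b3) \<Rightarrow> f r * (g1 b1 * (g2 b2 * g3 b3))))
       = sum f A * (sum g1 B * (sum g2 C * sum g3 D))"
  using assms by (simp add: sum.cartesian_product[symmetric] sum_distrib_left[symmetric] sum_distrib_right[symmetric])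

lemma om_scale: "k > 0 \<Longrightarrow> om (c * int k) (q * k) = om c q"
  unfolding om_def by (simp add: field_simps)

lemma char_sum:
  assumes n: "n \<ge> 1" and mH: "m \<in> Hlat"
  shows "(\<Sum>j\<in>Dset n. phi m (node n j)) = (if \<forall>i. 4 * int n dvd m$i then of_nat (4 * n^3) else 0)"
proof -
  have np: "n > 0" using n by simp
  from mH have ms: "m$1 + m$2 + m$3 + m$4 = 0" and md: "\<forall>a b. m$a mod 4 = m$b mod 4"
    unfolding Hlat_iff sum_4 by auto
  define \<mu> where "\<mu> i = (m$i - m$4) div 4" for i
  have mu: "m$i = m$4 + 4 * \<mu> i" for i
  proof -
    have "m$i mod 4 = m$4 mod 4" using md by simp
    then have "4 dvd m$i - m$4" by (simp add: mod_eq_dvd_iff)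
    then show ?thesis unfolding \<mu>_def by simp
  qed
  define A where "A = om (- m$4) (4 * n)"
  define B1 where "B1 = om (\<mu> 1) n"
  define B2 where "B2 = om (\<mu> 2) n"
  define B3 where "B3 = om (\<mu> 3) n"
  have "(\<Sum>j\<in>Dset n. phi m (node n j)) = (\<Sum>x\<in>Pset n. phi m (node n (mk x)))"
    by (rule sum.reindex_bij_betw[OF bij_mk, symmetric])
  also have "\<dots> = (\<Sum>x\<in>Pset n. (case x of (r, b1, b2, b3) \<Rightarrow> A ^ r * (B1 ^ b1 * (B2 ^ b2 * B3 ^ b3))))"
  proof (rule sum.cong[OF refl])
    fix x :: "nat \<times> nat \<times> nat \<times> nat"
    obtain r b1 b2 b3 where xx: "x = (r, b1, b2, b3)" by (cases x) auto
    show "phi m (node n (mk x)) = (case x of (r, b1, b2, b3) \<Rightarrow> A ^ r * (B1 ^ b1 * (B2 ^ b2 * B3 ^ b3)))"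
      unfolding xx A_def B1_def B2_def B3_def using phi_mk[OF np ms mu[of 1] mu[of 2] mu[of 3], of r b1 b2 b3]
      by (simp add: mult.assoc)
  qed
  also have "\<dots> = (\<Sum>r<4. A ^ r) * ((\<Sum>b<n. B1 ^ b) * ((\<Sum>b<n. B2 ^ b) * (\<Sum>b<n. B3 ^ b)))"
    unfolding Pset_def by (rule sum4_split) auto
  finally have eq: "(\<Sum>j\<in>Dset n. phi m (node n j)) = (\<Sum>r<4. A ^ r) * ((\<Sum>b<n. B1 ^ b) * ((\<Sum>b<n. B2 ^ b) * (\<Sum>b<n. B3 ^ b)))" .
  have g: "(\<Sum>b<n. om c n ^ b) = (if int n dvd c then of_nat n else 0)" for c using geo_sum[OF np] .
  show ?thesis
  proof (cases "int n dvd \<mu> 1 \<and> int n dvd \<mu> 2 \<and> int n dvd \<mu> 3")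
    case True
    have m4: "m$4 = - (\<mu> 1 + \<mu> 2 + \<mu> 3)" using ms mu[of 1] mu[of 2] mu[of 3] by simp
    then have "int n dvd m$4" using True by simp
    then obtain t where t: "m$4 = t * int n" by (auto simp: dvd_def mult.commute)
    have "A = om (- t) 4" unfolding A_def t using om_scale[OF np, of "- t" 4] by (simp add: mult.commute)
    then have sA: "(\<Sum>r<4. A ^ r) = (if 4 dvd - t then 4 else 0)" using geo_sum[of 4 "- t"] by simp
    have iff: "(\<forall>i. 4 * int n dvd m$i) \<longleftrightarrow> 4 dvd - t"
    proof
      assume "\<forall>i. 4 * int n dvd m$i"
      then have "4 * int n dvd t * int n" using t by metis
      then show "4 dvd - t" using np by simp
    next
      assume "4 dvd - t"
      then have d4: "4 * int n dvd m$4" unfolding t by (simp add: mult.commute)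
      show "\<forall>i. 4 * int n dvd m$i"
      proof
        fix i
        have "4 * int n dvd 4 * \<mu> i"
          using True exhaust_4[of i] d4 mu[of 4] by (auto simp: \<mu>_def)
        then show "4 * int n dvd m$i" using mu[of i] d4 by simp
      qed
    qed
    show ?thesis unfolding eq sA iff B1_def B2_def B3_def g using True by (simp add: power3_eq_cube mult.assoc)
  next
    case False
    have nall: "\<not> (\<forall>i. 4 * int n dvd m$i)"
    proof
      assume a: "\<forall>i. 4 * int n dvd m$i"
      have "int n dvd \<mu> i" for i
      proof -
        have "4 * int n dvd m$i - m$4" using a by (simp add: dvd_diff)
        then have "4 * int n dvd 4 * \<mu> i" using mu[of i] by simp
        then show ?thesis by simp
      qed
      then show False using False by simp
    qed
    have z: "(\<Sum>b<n. B1 ^ b) * ((\<Sum>b<n. B2 ^ b) * (\<Sum>b<n. B3 ^ b)) = 0"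
      unfolding B1_def B2_def B3_def g using False by auto
    show ?thesis unfolding eq if_not_P[OF nall] z by simp
  qed
qed

lemma lemma_E:
  assumes n: "n \<ge> 1" and k: "k \<in> Lambda n" and k': "k' \<in> Lambda n"
    and p: "\<sigma> permutes UNIV" and q: "\<tau> permutes UNIV"
    and d: "\<forall>i. 4 * int n dvd (ipv k \<sigma> - ipv k' \<tau>) $ i"
  shows "\<sigma> = \<tau> \<and> k = k'"
proof -
  have kU: "k \<in> U n" "k' \<in> U n" using k k' Lambda_U by auto
  have c: "cong4 n (ipv k \<sigma>) (ipv k' \<tau>)" using d unfolding cong4_def by simp
  have e: "ipv k \<sigma> = ipv k' \<tau>" by (rule U_inj[OF n U_ipv[OF kU(1) p] U_ipv[OF kU(2) q] c])
  have dk: "dec k" "dec k'" using Lambda_iff kU k k' by auto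
  have "k = ipv (ipv k \<sigma>) (inv \<sigma>)" unfolding ipv_comp permutes_inv_o(1)[OF p] by simp
  also have "\<dots> = ipv k' (\<tau> \<circ> inv \<sigma>)" unfolding e ipv_comp ..
  finally have kk: "k = ipv k' (\<tau> \<circ> inv \<sigma>)" .
  have pc: "\<tau> \<circ> inv \<sigma> permutes UNIV" using p q by (simp add: permutes_compose permutes_inv)
  have "\<tau> \<circ> inv \<sigma> = id" using dec_unique[OF pc dk(2)] dk(1) kk by simp
  then have "\<tau> \<circ> inv \<sigma> \<circ> \<sigma> = \<sigma>" by simp
  then have ts: "\<tau> = \<sigma>" by (simp only: o_assoc[symmetric] permutes_inv_o(2)[OF p] comp_id)
  then have "k = k'" using kk by (simp add: permutes_inv_o(1)[OF p])
  with ts show ?thesis by simp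
qed

lemma phi_per:
  assumes n: "n \<ge> 1" and mH: "m \<in> Hlat" and jH: "j \<in> Hlat" "j' \<in> Hlat" and c: "cong4 n j j'"
  shows "phi m (node n j) = phi m (node n j')"
proof -
  define N where "N = 4 * int n"
  have np: "n > 0" using n by simp
  define v where "v i = (j$i - j'$i) div N" for i
  have jv: "j$i = j'$i + N * v i" for i
    using c unfolding cong4_def v_def N_def by (metis add.commute diff_add_cancel dvd_mult_div_cancel)
  from mH have ms: "m$1 + m$2 + m$3 + m$4 = 0" and md: "\<forall>a b. m$a mod 4 = m$b mod 4"
    unfolding Hlat_iff sum_4 by auto
  define \<mu> where "\<mu> i = (m$i - m$4) div 4" for i
  have mu: "m$i = m$4 + 4 * \<mu> i" for i
  proof -
    have "m$i mod 4 = m$4 mod 4" using md by simp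
    then have "4 dvd m$i - m$4" by (simp add: mod_eq_dvd_iff)
    then show ?thesis unfolding \<mu>_def by simp
  qed
  have sj: "j$1 + j$2 + j$3 + j$4 = 0" "j'$1 + j'$2 + j'$3 + j'$4 = 0" using jH unfolding Hlat_iff sum_4 by auto
  have sv: "v 4 = - (v 1 + v 2 + v 3)"
  proof -
    have "N * (v 1 + v 2 + v 3 + v 4) = 0" using sj jv[of 1] jv[of 2] jv[of 3] jv[of 4] by (simp add: algebra_simps)
    then show ?thesis using np unfolding N_def by simp
  qed
  have mu4: "\<mu> 4 = 0" unfolding \<mu>_def by simp
  define T where "T = \<mu> 1 * v 1 + \<mu> 2 * v 2 + \<mu> 3 * v 3 + \<mu> 4 * v 4"
  have S: "(\<Sum>i\<in>UNIV. m$i * j$i) = (\<Sum>i\<in>UNIV. m$i * j'$i) + 16 * int n * T"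
    unfolding sum_4 T_def jv[of 1] jv[of 2] jv[of 3] jv[of 4] mu[of 1] mu[of 2] mu[of 3] sv N_def mu4
    by (simp add: algebra_simps)
  have "of_real (pi / 2) * \<i> * (of_int (\<Sum>i\<in>UNIV. m$i * j$i) / of_nat (4 * n))
      = of_real (pi / 2) * \<i> * (of_int (\<Sum>i\<in>UNIV. m$i * j'$i) / of_nat (4 * n)) + \<i> * (of_int T * (of_real pi * 2))"
    unfolding S using np by (simp add: field_simps)
  then show ?thesis unfolding phi_node by (simp add: exp_add)
qed

lemma TS_per:
  assumes n: "n \<ge> 1" and kH: "k \<in> Hlat" and jH: "j \<in> Hlat" "j' \<in> Hlat" and c: "cong4 n j j'"
  shows "TS k (node n j) = TS k (node n j')"
  unfolding TS_alt
  by (rule arg_cong[where f="\<lambda>x. - x / 24"], rule sum.cong[OF refl])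
     (simp add: phi_per[OF n Hlat_ipv[OF kH] jH c])

lemma TS_van:
  assumes n: "n \<ge> 1" and kH: "k \<in> Hlat" and jH: "j \<in> Hlat" and r: "\<not> reg n j"
  shows "TS k (node n j) = 0"
proof -
  obtain a b where ab: "a \<noteq> b" and d: "4 * int n dvd j$a - j$b" using r unfolding reg_def by auto
  define j' where "j' = ipv j (Transposition.transpose a b)"
  have j'H: "j' \<in> Hlat" unfolding j'_def using Hlat_ipv[OF jH transpose_permutes] .
  have c: "cong4 n j j'" unfolding cong4_def j'_def
  proof
    fix i
    show "4 * int n dvd j $ i - ipv j (Transposition.transpose a b) $ i"
      using d by (cases "i = a"; cases "i = b") (auto simp: Transposition.transpose_def dvd_diff_commute)
  qed
  have "TS k (node n j') = - TS k (node n j)"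
    unfolding j'_def node_ipv using TS_perm_t[OF transpose_permutes[of a b], of k "node n j"] ab
    by (simp add: sign_swap_id)
  moreover have "TS k (node n j) = TS k (node n j')" by (rule TS_per[OF n kH jH j'H c])
  ultimately show ?thesis by simp
qed

lemma sign_sq: "of_int (sign \<sigma>) * of_int (sign \<sigma>) = (1::complex)"
  by (simp flip: of_int_mult)

lemma ortho:
  assumes n: "n \<ge> 1" and k: "k \<in> Lambda n" and k': "k' \<in> Lambda n"
  shows "(\<Sum>j\<in>Lambda n. TS k (node n j) * cnj (TS k' (node n j))) = (if k = k' then of_nat (n^3) / 144 else 0)"
proof -
  define g where "g j = TS k (node n j) * cnj (TS k' (node n j))" for j
  have kH: "k \<in> Hlat" "k' \<in> Hlat" using k k' unfolding Lambda_def by auto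
  have UH: "U n \<subseteq> Hlat" unfolding U_def by auto
  have s1: "sum g (U n) = 24 * sum g (Lambda n)"
  proof (rule sum_U_Lambda)
    fix j and \<sigma> :: "4 \<Rightarrow> 4" assume "j \<in> U n" "\<sigma> permutes UNIV"
    then have p: "\<sigma> permutes UNIV" by simp
    have "g (ipv j \<sigma>) = (of_int (sign \<sigma>) * of_int (sign \<sigma>)) * (TS k (node n j) * cnj (TS k' (node n j)))"
      unfolding g_def node_ipv TS_perm_t[OF p] by (simp add: mult_ac)
    then show "g (ipv j \<sigma>) = g j" unfolding sign_sq g_def by simp
  next
    fix j a b assume "j \<in> U n" "a \<noteq> (b::4)" "j$a = j$b"
    then have "node n j $ a = node n j $ b" unfolding node_def by simp
    then show "g j = 0" unfolding g_def using TS_zero_t[OF \<open>a \<noteq> b\<close>] by simp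
  qed
  have s2: "sum g (Dset n) = sum g (U n)"
  proof (rule sum_D_U[OF n])
    fix j j' assume "j \<in> Hlat" "j' \<in> Hlat" "cong4 n j j'"
    then show "g j = g j'" unfolding g_def using TS_per[OF n kH(1)] TS_per[OF n kH(2)] by simp
  next
    fix j assume "j \<in> Hlat" "\<not> reg n j"
    then show "g j = 0" unfolding g_def using TS_van[OF n kH(1)] by simp
  qed
  have gexp: "g j = (\<Sum>\<sigma>\<in>perms. \<Sum>\<tau>\<in>perms. of_int (sign \<sigma>) * of_int (sign \<tau>) * phi (ipv k \<sigma> - ipv k' \<tau>) (node n j)) / 576" for j
  proof -
    have "g j = (\<Sum>\<sigma>\<in>perms. of_int (sign \<sigma>) * phi (ipv k \<sigma>) (node n j)) * (\<Sum>\<tau>\<in>perms. of_int (sign \<tau>) * cnj (phi (ipv k' \<tau>) (node n j))) / 576"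
      unfolding g_def TS_alt by simp
    also have "\<dots> = (\<Sum>\<sigma>\<in>perms. \<Sum>\<tau>\<in>perms. of_int (sign \<sigma>) * phi (ipv k \<sigma>) (node n j) * (of_int (sign \<tau>) * cnj (phi (ipv k' \<tau>) (node n j)))) / 576"
      by (simp add: sum_product)
    also have "\<dots> = (\<Sum>\<sigma>\<in>perms. \<Sum>\<tau>\<in>perms. of_int (sign \<sigma>) * of_int (sign \<tau>) * phi (ipv k \<sigma> - ipv k' \<tau>) (node n j)) / 576"
    proof -
      have eqst: "of_int (sign \<sigma>) * phi (ipv k \<sigma>) (node n j) * (of_int (sign \<tau>) * cnj (phi (ipv k' \<tau>) (node n j)))
          = of_int (sign \<sigma>) * of_int (sign \<tau>) * phi (ipv k \<sigma> - ipv k' \<tau>) (node n j)" for \<sigma> \<tau>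
        unfolding phi_mult_cnj[symmetric] by (simp add: mult_ac)
      show ?thesis by (intro arg_cong[where f="\<lambda>x. x / 576"] sum.cong refl eqst)
    qed
    finally show ?thesis .
  qed
  have "sum g (Dset n) = (\<Sum>\<sigma>\<in>perms. \<Sum>\<tau>\<in>perms. of_int (sign \<sigma>) * of_int (sign \<tau>) * (\<Sum>j\<in>Dset n. phi (ipv k \<sigma> - ipv k' \<tau>) (node n j))) / 576"
  proof -
    have "sum g (Dset n) = (\<Sum>j\<in>Dset n. \<Sum>\<sigma>\<in>perms. \<Sum>\<tau>\<in>perms. of_int (sign \<sigma>) * of_int (sign \<tau>) * phi (ipv k \<sigma> - ipv k' \<tau>) (node n j)) / 576"
      unfolding gexp by (simp add: sum_divide_distrib)
    also have "(\<Sum>j\<in>Dset n. \<Sum>\<sigma>\<in>perms. \<Sum>\<tau>\<in>perms. of_int (sign \<sigma>) * of_int (sign \<tau>) * phi (ipv k \<sigma> - ipv k' \<tau>) (node n j))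
        = (\<Sum>\<sigma>\<in>perms. \<Sum>j\<in>Dset n. \<Sum>\<tau>\<in>perms. of_int (sign \<sigma>) * of_int (sign \<tau>) * phi (ipv k \<sigma> - ipv k' \<tau>) (node n j))"
      by (rule sum.swap)
    also have "\<dots> = (\<Sum>\<sigma>\<in>perms. \<Sum>\<tau>\<in>perms. \<Sum>j\<in>Dset n. of_int (sign \<sigma>) * of_int (sign \<tau>) * phi (ipv k \<sigma> - ipv k' \<tau>) (node n j))"
      by (rule sum.cong[OF refl], rule sum.swap)
    also have "\<dots> = (\<Sum>\<sigma>\<in>perms. \<Sum>\<tau>\<in>perms. of_int (sign \<sigma>) * of_int (sign \<tau>) * (\<Sum>j\<in>Dset n. phi (ipv k \<sigma> - ipv k' \<tau>) (node n j)))"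
      by (rule sum.cong[OF refl], rule sum.cong[OF refl], rule sum_distrib_left[symmetric])
    finally show ?thesis .
  qed
  also have "\<dots> = (\<Sum>\<sigma>\<in>perms. \<Sum>\<tau>\<in>perms. of_int (sign \<sigma>) * of_int (sign \<tau>) * (if \<sigma> = \<tau> \<and> k = k' then of_nat (4 * n^3) else 0)) / 576"
  proof -
    have "(\<Sum>j\<in>Dset n. phi (ipv k \<sigma> - ipv k' \<tau>) (node n j)) = (if \<sigma> = \<tau> \<and> k = k' then of_nat (4 * n^3) else 0)"
      if p: "\<sigma> permutes UNIV" and q: "\<tau> permutes UNIV" for \<sigma> \<tau>
    proof -
      have mH: "ipv k \<sigma> - ipv k' \<tau> \<in> Hlat" using Hlat_diff[OF Hlat_ipv[OF kH(1) p] Hlat_ipv[OF kH(2) q]] .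
      have "(\<forall>i. 4 * int n dvd (ipv k \<sigma> - ipv k' \<tau>) $ i) \<longleftrightarrow> \<sigma> = \<tau> \<and> k = k'"
        using lemma_E[OF n k k' p q] by auto
      then show ?thesis unfolding char_sum[OF n mH] by simp
    qed
    then show ?thesis by (intro arg_cong[where f="\<lambda>x. x / 576"] sum.cong refl) auto
  qed
  also have "\<dots> = (if k = k' then 24 * of_nat (4 * n^3) else 0) / 576"
  proof (cases "k = k'")
    case True
    have "(\<Sum>\<sigma>\<in>perms. \<Sum>\<tau>\<in>perms. of_int (sign \<sigma>) * of_int (sign \<tau>) * (if \<sigma> = \<tau> \<and> k = k' then of_nat (4 * n^3) else 0))
        = (\<Sum>\<sigma>\<in>perms. (of_nat (4 * n^3) :: complex))"
    proof (rule sum.cong[OF refl])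
      fix \<sigma> assume "\<sigma> \<in> perms"
      have "(\<Sum>\<tau>\<in>perms. of_int (sign \<sigma>) * of_int (sign \<tau>) * (if \<sigma> = \<tau> \<and> k = k' then of_nat (4 * n^3) else 0))
          = (\<Sum>\<tau>\<in>perms. if \<sigma> = \<tau> then of_int (sign \<sigma>) * of_int (sign \<tau>) * (of_nat (4 * n^3) :: complex) else 0)"
        using True by (intro sum.cong) auto
      also have "\<dots> = of_int (sign \<sigma>) * of_int (sign \<sigma>) * of_nat (4 * n^3)"
        using \<open>\<sigma> \<in> perms\<close> by (simp add: finite_perms)
      finally show "(\<Sum>\<tau>\<in>perms. of_int (sign \<sigma>) * of_int (sign \<tau>) * (if \<sigma> = \<tau> \<and> k = k' then of_nat (4 * n^3) else 0)) = (of_nat (4 * n^3) :: complex)"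
        by (simp add: sign_sq)
    qed
    then show ?thesis using True by (simp add: card_perms)
  qed simp
  finally have "sum g (Dset n) = (if k = k' then 24 * of_nat (4 * n^3) else 0) / 576" .
  then have "24 * sum g (Lambda n) = (if k = k' then 24 * of_nat (4 * n^3) else 0) / 576" using s1 s2 by simp
  then show ?thesis unfolding g_def[symmetric] by (cases "k = k'") (simp_all add: field_simps)
qed

lemma exp_i_diff: "exp (\<i> * of_real x) - exp (- (\<i> * of_real x)) = 2 * \<i> * of_real (sin x)"
proof -
  have "sin (of_real x :: complex) = (exp (\<i> * of_real x) - exp (- (\<i> * of_real x))) / (2 * \<i>)"
    by (rule sin_exp_eq)
  then show ?thesis by (simp add: sin_of_real field_simps)
qed

lemma dir1_sum:
  "complex_of_real (dir1 m y) = (\<Sum>a<m. exp (\<i> * of_real (pi * (real m - 1 - 2 * real a) * y)))"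
proof (cases "y \<in> \<int>")
  case True
  then obtain z where z: "y = of_int z" by (auto elim: Ints_cases)
  define w where "w = int m - 1"
  have tm: "exp (\<i> * of_real (pi * (real m - 1 - 2 * real a) * y)) = of_real (if even (w * z) then 1 else - 1)" for a
  proof -
    have th: "pi * (real m - 1 - 2 * real a) * y = pi * of_int ((w - 2 * int a) * z)"
      unfolding z w_def by simp
    have "exp (\<i> * of_real (pi * (real m - 1 - 2 * real a) * y)) = cis (pi * of_int ((w - 2 * int a) * z))"
      unfolding th cis_conv_exp by simp
    also have "\<dots> = of_real (cos (pi * of_int ((w - 2 * int a) * z)))"
      using sin_npi_int[of "(w - 2 * int a) * z"] by (simp only: complex_eq_iff cis.simps Re_complex_of_real Im_complex_of_real)
    also have "cos (pi * of_int ((w - 2 * int a) * z)) = (if even ((w - 2 * int a) * z) then 1 else - 1)"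
      by (rule cos_npi_int)
    also have "even ((w - 2 * int a) * z) \<longleftrightarrow> even (w * z)"
      by (simp add: left_diff_distrib)
    finally show ?thesis .
  qed
  have l: "dir1 m y = real m * (if even (w * z) then 1 else - 1)"
  proof -
    have c1: "cos (pi * real m * y) = (if even (int m * z) then 1 else - 1)"
      unfolding z using cos_npi_int[of "int m * z"] by (simp add: mult.assoc)
    have c2: "cos (pi * y) = (if even z then 1 else - 1)" unfolding z by (simp add: cos_npi_int)
    have "even (w * z) \<longleftrightarrow> (even (int m * z) \<longleftrightarrow> even z)"
      unfolding w_def by (simp add: algebra_simps) blast
    then show ?thesis unfolding dir1_def using True c1 c2 by auto
  qed
  show ?thesis unfolding tm l by simp
next
  case False
  have s: "sin (pi * y) \<noteq> 0"
  proof
    assume "sin (pi * y) = 0"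
    then obtain i :: int where "pi * y = of_int i * pi" unfolding sin_zero_iff_int2 by blast
    then have "y = of_int i" by simp
    then show False using False by simp
  qed
  define E where "E t = exp (\<i> * of_real (pi * t * y))" for t
  have Em: "E t * E u = E (t + u)" for t u unfolding E_def by (simp add: exp_add[symmetric] algebra_simps)
  have Ed: "E t - E (- t) = 2 * \<i> * of_real (sin (pi * t * y))" for t
    unfolding E_def using exp_i_diff[of "pi * t * y"] by simp
  define S where "S = (\<Sum>a<m. E (real m - 1 - 2 * real a))"
  have "(E 1 - E (- 1)) * S = (\<Sum>a<m. E (real m - 2 * real a) - E (real m - 2 * real (Suc a)))"
    unfolding S_def sum_distrib_left
    by (rule sum.cong[OF refl]) (simp add: left_diff_distrib Em algebra_simps)
  also have "\<dots> = E (real m - 2 * real 0) - E (real m - 2 * real m)"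
    by (rule sum_lessThan_telescope'[where f="\<lambda>a. E (real m - 2 * real a)"])
  also have "\<dots> = E (real m) - E (- real m)" by simp
  finally have "2 * \<i> * of_real (sin (pi * y)) * S = 2 * \<i> * of_real (sin (pi * real m * y))"
    using Ed[of 1] Ed[of "real m"] by simp
  then have "S = of_real (sin (pi * real m * y)) / of_real (sin (pi * y))"
    using s by (simp add: field_simps)
  then show ?thesis unfolding dir1_def using False S_def E_def by simp
qed

definition Bx :: "int \<Rightarrow> int \<Rightarrow> (int^4) set" where
  "Bx lo hi = {a. \<forall>i. lo \<le> a$i \<and> a$i < hi}"

definition psi :: "real^4 \<Rightarrow> int^4 \<Rightarrow> complex" where
  "psi x a = exp (- (2 * of_real pi * \<i> * of_real (\<Sum>i\<in>UNIV. real_of_int (a$i) * x$i)))"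

lemma finite_Bx: "finite (Bx lo hi)"
proof (rule finite_subset[OF _ finite_box[of lo hi]])
  show "Bx lo hi \<subseteq> {k. \<forall>i. lo \<le> k $ i \<and> k $ i \<le> hi}"
  proof
    fix a assume a: "a \<in> Bx lo hi"
    show "a \<in> {k. \<forall>i. lo \<le> k $ i \<and> k $ i \<le> hi}"
    proof (simp, intro allI)
      fix i show "lo \<le> a $ i \<and> a $ i \<le> hi" using a unfolding Bx_def by (simp add: less_imp_le)
    qed
  qed
qed

lemma R4H_sum: "x \<in> R4H \<Longrightarrow> x$1 + x$2 + x$3 + x$4 = 0"
  unfolding R4H_def sum_4 by simp

lemma Theta_sum:
  assumes x: "x \<in> R4H"
  shows "complex_of_real (Theta m x) = (\<Sum>a\<in>Bx 0 (int m). psi x a)"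
proof -
  define e where "e i a = exp (\<i> * of_real (pi * (real m - 1 - 2 * real a) * x$i))" for i a
  have "complex_of_real (Theta m x) = (\<Prod>i\<in>UNIV. \<Sum>a<m. e i a)"
    unfolding Theta_def of_real_prod e_def dir1_sum ..
  also have "\<dots> = (\<Sum>f\<in>PiE UNIV (\<lambda>_. {..<m}). \<Prod>i\<in>UNIV. e i (f i))"
    by (rule prod_sum_PiE) auto
  also have "\<dots> = (\<Sum>f\<in>PiE UNIV (\<lambda>_. {..<m}). psi x (\<chi> i. int (f i)))"
  proof (rule sum.cong[OF refl])
    fix f :: "4 \<Rightarrow> nat"
    have sx: "(\<Sum>i\<in>UNIV. x$i) = 0" using x unfolding R4H_def by simp
    have "(\<Sum>i\<in>UNIV. pi * (real m - 1 - 2 * real (f i)) * x$i) = (\<Sum>i\<in>UNIV. pi * (real m - 1) * x$i - 2 * pi * (real (f i) * x$i))"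
      by (rule sum.cong) (simp_all add: algebra_simps)
    also have "\<dots> = pi * (real m - 1) * (\<Sum>i\<in>UNIV. x$i) - 2 * pi * (\<Sum>i\<in>UNIV. real (f i) * x$i)"
      by (simp add: sum_subtractf sum_distrib_left)
    finally have r: "(\<Sum>i\<in>UNIV. pi * (real m - 1 - 2 * real (f i)) * x$i) = - (2 * pi * (\<Sum>i\<in>UNIV. real (f i) * x$i))"
      unfolding sx by simp
    have "(\<Prod>i\<in>UNIV. e i (f i)) = exp (\<Sum>i\<in>UNIV. \<i> * of_real (pi * (real m - 1 - 2 * real (f i)) * x$i))"
      unfolding e_def by (simp add: exp_sum)
    also have "(\<Sum>i\<in>UNIV. \<i> * of_real (pi * (real m - 1 - 2 * real (f i)) * x$i))
        = \<i> * of_real (\<Sum>i\<in>UNIV. pi * (real m - 1 - 2 * real (f i)) * x$i)"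
      by (simp add: sum_distrib_left)
    also have "\<dots> = - (2 * of_real pi * \<i> * of_real (\<Sum>i\<in>UNIV. real (f i) * x$i))"
      unfolding r by simp
    finally show "(\<Prod>i\<in>UNIV. e i (f i)) = psi x (\<chi> i. int (f i))"
      unfolding psi_def by simp
  qed
  also have "\<dots> = (\<Sum>a\<in>Bx 0 (int m). psi x a)"
  proof (rule sum.reindex_bij_betw)
    show "bij_betw (\<lambda>f. \<chi> i. int (f i)) (PiE UNIV (\<lambda>_. {..<m})) (Bx 0 (int m))"
    proof (rule bij_betw_imageI)
      show "inj_on (\<lambda>f. \<chi> i. int (f i)) (PiE UNIV (\<lambda>_. {..<m}))"
        by (rule inj_onI) (simp add: vec_eq_iff fun_eq_iff)
      show "(\<lambda>f. \<chi> i. int (f i)) ` (PiE UNIV (\<lambda>_. {..<m})) = Bx 0 (int m)"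
      proof (rule set_eqI, rule iffI)
        fix a :: "int^4" assume "a \<in> (\<lambda>f. \<chi> i. int (f i)) ` (PiE UNIV (\<lambda>_. {..<m}))"
        then show "a \<in> Bx 0 (int m)" unfolding Bx_def by auto
      next
        fix a :: "int^4" assume a: "a \<in> Bx 0 (int m)"
        have "nat (a$i) < m" for i
        proof -
          have "0 \<le> a$i \<and> a$i < int m" using a unfolding Bx_def by simp
          then show ?thesis by (simp add: nat_less_iff)
        qed
        then have m1: "(\<lambda>i. nat (a$i)) \<in> PiE UNIV (\<lambda>_. {..<m})" by (simp add: PiE_iff)
        have m2: "a = (\<lambda>f. \<chi> i. int (f i)) (\<lambda>i. nat (a$i))" using a unfolding Bx_def by (simp add: vec_eq_iff)
        show "a \<in> (\<lambda>f. \<chi> i. int (f i)) ` (PiE UNIV (\<lambda>_. {..<m}))" by (rule image_eqI[where f="\<lambda>f. \<chi> i. int (f i)" and x="\<lambda>i. nat (a$i)", OF m2 m1])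
      qed
    qed
  qed
  finally show ?thesis .
qed

definition one4 :: "int^4" where "one4 = (\<chi> i. 1)"

lemma psi_shift: "x \<in> R4H \<Longrightarrow> psi x (a + one4) = psi x a"
proof -
  assume x: "x \<in> R4H"
  have "(\<Sum>i\<in>UNIV. real_of_int ((a + one4)$i) * x$i) = (\<Sum>i\<in>UNIV. real_of_int (a$i) * x$i)"
    using R4H_sum[OF x] unfolding sum_4 one4_def by (simp add: algebra_simps)
  then show ?thesis unfolding psi_def by simp
qed

lemma Theta_diff:
  assumes n: "n \<ge> 1" and x: "x \<in> R4H"
  shows "complex_of_real (Theta n x - Theta (n - 1) x) = (\<Sum>a\<in>{a\<in>Bx 0 (int n). \<exists>i. a$i = 0}. psi x a)"
proof -
  have "(\<Sum>a\<in>Bx 0 (int (n - 1)). psi x a) = (\<Sum>a\<in>Bx 1 (int n). psi x a)"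
  proof (rule sum.reindex_bij_witness[where i="\<lambda>a. a - one4" and j="\<lambda>a. a + one4"])
    fix a assume a: "a \<in> Bx 0 (int (n - 1))"
    show "a + one4 - one4 = a" by simp
    show "psi x (a + one4) = psi x a" using psi_shift[OF x] .
    show "a + one4 \<in> Bx 1 (int n)" unfolding Bx_def mem_Collect_eq
    proof (intro allI)
      fix i have "0 \<le> a$i \<and> a$i < int (n - 1)" using a unfolding Bx_def by simp
      then show "1 \<le> (a + one4) $ i \<and> (a + one4) $ i < int n" using n unfolding one4_def by (simp add: of_nat_diff)
    qed
  next
    fix a assume a: "a \<in> Bx 1 (int n)"
    show "a - one4 + one4 = a" by simp
    show "a - one4 \<in> Bx 0 (int (n - 1))" unfolding Bx_def mem_Collect_eq
    proof (intro allI)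
      fix i have "1 \<le> a$i \<and> a$i < int n" using a unfolding Bx_def by simp
      then show "0 \<le> (a - one4) $ i \<and> (a - one4) $ i < int (n - 1)" using n unfolding one4_def by (simp add: of_nat_diff)
    qed
  qed
  moreover have seq: "Bx 0 (int n) = Bx 1 (int n) \<union> {a\<in>Bx 0 (int n). \<exists>i. a$i = 0}"
  proof (rule set_eqI, rule iffI)
    fix a assume a: "a \<in> Bx 0 (int n)"
    show "a \<in> Bx 1 (int n) \<union> {a\<in>Bx 0 (int n). \<exists>i. a$i = 0}"
    proof (cases "\<exists>i. a$i = 0")
      case True then show ?thesis using a by simp
    next
      case False
      have "1 \<le> a$i \<and> a$i < int n" for i
      proof -
        have "0 \<le> a$i \<and> a$i < int n" using a unfolding Bx_def by simp
        moreover have "a$i \<noteq> 0" using False by simp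
        ultimately show ?thesis by simp
      qed
      then show ?thesis unfolding Bx_def by simp
    qed
  next
    fix a assume a: "a \<in> Bx 1 (int n) \<union> {a\<in>Bx 0 (int n). \<exists>i. a$i = 0}"
    show "a \<in> Bx 0 (int n)"
    proof (cases "a \<in> Bx 1 (int n)")
      case True
      have "0 \<le> a$i \<and> a$i < int n" for i
      proof -
        have "1 \<le> a$i \<and> a$i < int n" using True unfolding Bx_def by simp
        then show ?thesis by simp
      qed
      then show ?thesis unfolding Bx_def by simp
    next
      case False then show ?thesis using a by simp
    qed
  qed
  moreover have disj: "Bx 1 (int n) \<inter> {a\<in>Bx 0 (int n). \<exists>i. a$i = 0} = {}"
  proof (rule equals0I)
    fix a assume a: "a \<in> Bx 1 (int n) \<inter> {a\<in>Bx 0 (int n). \<exists>i. a$i = 0}"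
    then obtain i where "a$i = 0" by blast
    moreover have "1 \<le> a$i" using a unfolding Bx_def by simp
    ultimately show False by simp
  qed
  moreover have fA: "finite {a\<in>Bx 0 (int n). \<exists>i. a$i = 0}" using finite_Bx by simp
  ultimately have "(\<Sum>a\<in>Bx 0 (int n). psi x a) = (\<Sum>a\<in>Bx 0 (int (n - 1)). psi x a) + (\<Sum>a\<in>{a\<in>Bx 0 (int n). \<exists>i. a$i = 0}. psi x a)"
    using sum.union_disjoint[OF finite_Bx fA disj, of "psi x"] seq by simp
  then show ?thesis using Theta_sum[OF x, of n] Theta_sum[OF x, of "n - 1"] by simp
qed

definition kappa :: "int^4 \<Rightarrow> int^4" where
  "kappa a = (\<chi> i. (\<Sum>l\<in>UNIV. a$l) - 4 * a$i)"

definition A0 :: "nat \<Rightarrow> (int^4) set" where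
  "A0 n = {a\<in>Bx 0 (int n). \<exists>i. a$i = 0}"

lemma kappa_nth: "kappa a $ i = (\<Sum>l\<in>UNIV. a$l) - 4 * a$i" unfolding kappa_def by simp

lemma phi_kappa: assumes x: "x \<in> R4H" shows "phi (kappa a) x = psi x a"
proof -
  have sx: "(\<Sum>i\<in>UNIV. x$i) = 0" using x unfolding R4H_def by simp
  define S where "S = (\<Sum>l\<in>UNIV. a$l)"
  have "(\<Sum>i\<in>UNIV. real_of_int (kappa a $ i) * x$i) = (\<Sum>i\<in>UNIV. real_of_int S * x$i - 4 * (real_of_int (a$i) * x$i))"
    by (rule sum.cong) (simp_all add: kappa_nth S_def algebra_simps)
  also have "\<dots> = real_of_int S * (\<Sum>i\<in>UNIV. x$i) - 4 * (\<Sum>i\<in>UNIV. real_of_int (a$i) * x$i)"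
    by (simp add: sum_subtractf sum_distrib_left)
  finally have e: "(\<Sum>i\<in>UNIV. real_of_int (kappa a $ i) * x$i) = - 4 * (\<Sum>i\<in>UNIV. real_of_int (a$i) * x$i)"
    unfolding sx by simp
  show ?thesis unfolding phi_def psi_def e by (simp add: field_simps)
qed

lemma bij_kappa: assumes n: "n \<ge> 1" shows "bij_betw kappa (A0 n) (U n)"
proof (rule bij_betw_imageI)
  show "inj_on kappa (A0 n)"
  proof (rule inj_onI)
    fix a b assume a: "a \<in> A0 n" and b: "b \<in> A0 n" and e: "kappa a = kappa b"
    define c where "c = (\<Sum>l\<in>UNIV. a$l) - (\<Sum>l\<in>UNIV. b$l)"
    have ci: "4 * (a$i - b$i) = c" for i
      using arg_cong[OF e, of "\<lambda>v. v$i"] unfolding kappa_nth c_def by simp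
    obtain i0 where i0: "a$i0 = 0" using a unfolding A0_def by auto
    obtain i1 where i1: "b$i1 = 0" using b unfolding A0_def by auto
    have "0 \<le> b$i0" using b unfolding A0_def Bx_def by simp
    moreover have "0 \<le> a$i1" using a unfolding A0_def Bx_def by simp
    ultimately have "c = 0" using ci[of i0] ci[of i1] i0 i1 by simp
    then have "a$i = b$i" for i using ci[of i] by simp
    then show "a = b" by (simp add: vec_eq_iff)
  qed
  show "kappa ` A0 n = U n"
  proof (rule set_eqI, rule iffI)
    fix k assume "k \<in> kappa ` A0 n"
    then obtain a where a: "a \<in> A0 n" and k: "k = kappa a" by blast
    have bd: "0 \<le> a$i \<and> a$i < int n" for i using a unfolding A0_def Bx_def by simp
    have m4: "(S - 4 * t) mod 4 = S mod 4" for S t :: int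
    proof -
      have "(S + (- t) * 4) mod 4 = S mod 4" by (rule mod_mult_self1)
      then show ?thesis by (simp add: mult.commute)
    qed
    have "(\<Sum>i\<in>UNIV. kappa a $ i) = 0" unfolding kappa_nth sum_4 by simp
    moreover have "kappa a $ p mod 4 = kappa a $ q mod 4" for p q unfolding kappa_nth m4 ..
    ultimately have "kappa a \<in> Hlat" unfolding Hlat_iff by simp
    moreover have "kappa a $ p - kappa a $ q < 4 * int n" for p q
      using bd[of p] bd[of q] unfolding kappa_nth by simp
    ultimately show "k \<in> U n" unfolding U_def k by simp
  next
    fix k assume k: "k \<in> U n"
    then have kH: "k \<in> Hlat" and kd: "\<And>p q. k$p - k$q < 4 * int n" unfolding U_def by auto
    have md: "k$p mod 4 = k$q mod 4" for p q using kH unfolding Hlat_iff by auto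
    have sk: "(\<Sum>i\<in>UNIV. k$i) = 0" using kH unfolding Hlat_iff by auto
    define M where "M = Max (range (\<lambda>i. k$i))"
    have Mge: "k$i \<le> M" for i unfolding M_def by (rule Max_ge) auto
    obtain i0 where i0: "k$i0 = M"
    proof -
      have "M \<in> range (\<lambda>i. k$i)" unfolding M_def by (rule Max_in) auto
      then show ?thesis using that by auto
    qed
    define a where "a = (\<chi> i. (M - k$i) div 4)"
    have a4: "4 * a$i = M - k$i" for i
    proof -
      have "4 dvd M - k$i" using md[of i0 i] i0 by (metis mod_eq_dvd_iff)
      then show ?thesis unfolding a_def by simp
    qed
    have "a \<in> A0 n"
    proof -
      have "0 \<le> a$i \<and> a$i < int n" for i using a4[of i] Mge[of i] kd[of i0 i] i0 by simp
      moreover have "a$i0 = 0" using a4[of i0] i0 by simp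
      ultimately show ?thesis unfolding A0_def Bx_def by auto
    qed
    moreover have "kappa a = k"
    proof -
      have "4 * (\<Sum>l\<in>UNIV. a$l) = (\<Sum>l\<in>UNIV. M - k$l)" unfolding sum_distrib_left a4 ..
      also have "\<dots> = 4 * M" using sk unfolding sum_4 by simp
      finally have S: "(\<Sum>l\<in>UNIV. a$l) = M" by simp
      have "kappa a $ i = k $ i" for i unfolding kappa_nth S using a4[of i] by simp
      then show ?thesis by (simp add: vec_eq_iff)
    qed
    ultimately show "k \<in> kappa ` A0 n" by (metis imageI)
  qed
qed

lemma K_lemma:
  assumes n: "n \<ge> 1" and x: "x \<in> R4H"
  shows "(\<Sum>k\<in>U n. phi k x) = complex_of_real (Theta n x - Theta (n - 1) x)"
proof -
  have "(\<Sum>k\<in>U n. phi k x) = (\<Sum>a\<in>A0 n. phi (kappa a) x)"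
    by (rule sum.reindex_bij_betw[OF bij_kappa[OF n], symmetric])
  also have "\<dots> = (\<Sum>a\<in>A0 n. psi x a)" using phi_kappa[OF x] by simp
  also have "\<dots> = complex_of_real (Theta n x - Theta (n - 1) x)"
    unfolding A0_def using Theta_diff[OF n x] by simp
  finally show ?thesis .
qed

lemma U_reindex:
  assumes p: "\<tau> permutes UNIV"
  shows "(\<Sum>k\<in>U n. F (ipv k \<tau>)) = (\<Sum>k\<in>U n. F k)"
proof (rule sum.reindex_bij_witness[where i="\<lambda>k. ipv k (inv \<tau>)" and j="\<lambda>k. ipv k \<tau>"])
  have pi: "inv \<tau> permutes UNIV" using p by (simp add: permutes_inv)
  fix a assume a: "a \<in> U n"
  show "ipv (ipv a \<tau>) (inv \<tau>) = a" unfolding ipv_comp permutes_inv_o(1)[OF p] by simp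
  show "ipv a \<tau> \<in> U n" using U_ipv[OF a p] .
  show "ipv a (inv \<tau>) \<in> U n" using U_ipv[OF a pi] .
  show "ipv (ipv a (inv \<tau>)) \<tau> = a" unfolding ipv_comp permutes_inv_o(2)[OF p] by simp
  show "F (ipv a \<tau>) = F (ipv a \<tau>)" ..
qed

lemma kernel:
  "(\<Sum>k\<in>Lambda n. TS k t * cnj (TS k s)) = Pminus (\<lambda>x. \<Sum>k\<in>U n. phi k (x - s)) t / 24"
proof -
  define h where "h k = TS k t * cnj (TS k s)" for k
  define F where "F k = TS k t * cnj (phi k s)" for k
  have s1: "sum h (U n) = 24 * sum h (Lambda n)"
  proof (rule sum_U_Lambda)
    fix k and \<sigma> :: "4 \<Rightarrow> 4" assume "k \<in> U n" "\<sigma> permutes UNIV"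
    then have p: "\<sigma> permutes UNIV" by simp
    have "h (ipv k \<sigma>) = (of_int (sign \<sigma>) * of_int (sign \<sigma>)) * (TS k t * cnj (TS k s))"
      unfolding h_def TS_perm_k[OF p] by (simp add: mult_ac)
    then show "h (ipv k \<sigma>) = h k" unfolding sign_sq h_def by simp
  next
    fix k a b assume "k \<in> U n" "a \<noteq> (b::4)" "k$a = k$b"
    then show "h k = 0" unfolding h_def using TS_zero_k[of a b k t] by simp
  qed
  have hk: "h k = - (\<Sum>\<tau>\<in>perms. F (ipv k \<tau>)) / 24" for k
  proof -
    have "h k = - (\<Sum>\<tau>\<in>perms. TS k t * (of_int (sign \<tau>) * cnj (phi (ipv k \<tau>) s))) / 24"
      unfolding h_def TS_alt[of k s] by (simp add: sum_distrib_left)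
    also have "\<dots> = - (\<Sum>\<tau>\<in>perms. F (ipv k \<tau>)) / 24"
    proof -
      have eqF: "TS k t * (of_int (sign \<tau>) * cnj (phi (ipv k \<tau>) s)) = F (ipv k \<tau>)" if "\<tau> \<in> perms" for \<tau>
        using that unfolding F_def by (simp add: TS_perm_k mult_ac)
      have "(\<Sum>\<tau>\<in>perms. TS k t * (of_int (sign \<tau>) * cnj (phi (ipv k \<tau>) s))) = (\<Sum>\<tau>\<in>perms. F (ipv k \<tau>))"
        by (rule sum.cong[OF refl]) (rule eqF)
      then show ?thesis by simp
    qed
    finally show ?thesis .
  qed
  have s2: "sum h (U n) = - sum F (U n)"
  proof -
    have "sum h (U n) = - (\<Sum>k\<in>U n. \<Sum>\<tau>\<in>perms. F (ipv k \<tau>)) / 24"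
      unfolding hk by (simp add: sum_divide_distrib sum_negf)
    also have "(\<Sum>k\<in>U n. \<Sum>\<tau>\<in>perms. F (ipv k \<tau>)) = (\<Sum>\<tau>\<in>perms. \<Sum>k\<in>U n. F (ipv k \<tau>))"
      by (rule sum.swap)
    also have "\<dots> = (\<Sum>\<tau>\<in>perms. sum F (U n))"
      by (rule sum.cong[OF refl]) (simp add: U_reindex)
    also have "\<dots> = 24 * sum F (U n)" by (simp add: card_perms)
    finally show ?thesis by simp
  qed
  have s3: "- sum F (U n) = Pminus (\<lambda>x. \<Sum>k\<in>U n. phi k (x - s)) t"
  proof -
    have "- sum F (U n) = (\<Sum>k\<in>U n. (\<Sum>\<sigma>\<in>perms. of_int (sign \<sigma>) * phi k (perm_vec t \<sigma>)) / 24 * cnj (phi k s))"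
      unfolding F_def TS_def Pminus_def by (simp add: sum_negf)
    also have "\<dots> = (\<Sum>k\<in>U n. \<Sum>\<sigma>\<in>perms. of_int (sign \<sigma>) * phi k (perm_vec t \<sigma> - s)) / 24"
      by (simp add: sum_divide_distrib sum_distrib_right mult.assoc phi_mult_cnj2)
    also have "(\<Sum>k\<in>U n. \<Sum>\<sigma>\<in>perms. of_int (sign \<sigma>) * phi k (perm_vec t \<sigma> - s)) = (\<Sum>\<sigma>\<in>perms. \<Sum>k\<in>U n. of_int (sign \<sigma>) * phi k (perm_vec t \<sigma> - s))"
      by (rule sum.swap)
    also have "\<dots> = (\<Sum>\<sigma>\<in>perms. of_int (sign \<sigma>) * (\<Sum>k\<in>U n. phi k (perm_vec t \<sigma> - s)))"
      by (simp add: sum_distrib_left)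
    finally show ?thesis unfolding Pminus_def by simp
  qed
  from s1 s2 s3 have "24 * sum h (Lambda n) = Pminus (\<lambda>x. \<Sum>k\<in>U n. phi k (x - s)) t" by simp
  then show ?thesis unfolding h_def by (simp add: mult.commute)
qed

lemma Pminus_of_real:
  "Pminus (\<lambda>x. complex_of_real (G x)) t = complex_of_real (Pminus G t)"
  unfolding Pminus_def by simp

lemma Pminus_cong:
  "(\<And>\<sigma>. \<sigma> permutes UNIV \<Longrightarrow> f (perm_vec t \<sigma>) = g (perm_vec t \<sigma>)) \<Longrightarrow> Pminus f t = Pminus g t"
  unfolding Pminus_def by (rule arg_cong[where f="\<lambda>x. x / 24"], rule sum.cong) auto

lemma ell_formula:
  assumes n: "n \<ge> 1" and j: "j \<in> Lambda n" and t: "t \<in> R4H"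
  shows "ell n j t = complex_of_real (6 / real n ^ 3 *
           Pminus (\<lambda>s. Theta n (s - node n j) - Theta (n - 1) (s - node n j)) t)"
proof -
  have jH: "j \<in> Hlat" using j unfolding Lambda_def by auto
  have PK: "Pminus (\<lambda>x. \<Sum>k\<in>U n. phi k (x - node n j)) t
      = Pminus (\<lambda>x. complex_of_real (Theta n (x - node n j) - Theta (n - 1) (x - node n j))) t"
  proof (rule Pminus_cong)
    fix \<sigma> :: "4 \<Rightarrow> 4" assume p: "\<sigma> permutes UNIV"
    have "perm_vec t \<sigma> - node n j \<in> R4H" using R4H_diff[OF R4H_perm[OF t p] node_R4H[OF jH]] .
    then show "(\<Sum>k\<in>U n. phi k (perm_vec t \<sigma> - node n j))
        = complex_of_real (Theta n (perm_vec t \<sigma> - node n j) - Theta (n - 1) (perm_vec t \<sigma> - node n j))"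
      by (rule K_lemma[OF n])
  qed
  define P where "P = Pminus (\<lambda>s. Theta n (s - node n j) - Theta (n - 1) (s - node n j)) t"
  have X: "(\<Sum>k\<in>Lambda n. TS k t * cnj (TS k (node n j))) = complex_of_real P / 24"
    by (simp only: kernel PK Pminus_of_real P_def)
  have e: "144 / real n ^ 3 * P / 24 = 6 / real n ^ 3 * P" by simp
  have "ell n j t = complex_of_real (144 / real n ^ 3) * (complex_of_real P / 24)"
    unfolding ell_def X ..
  also have "\<dots> = complex_of_real (144 / real n ^ 3 * P / 24)" by simp
  finally have "ell n j t = complex_of_real (144 / real n ^ 3 * P / 24)" .
  then have "ell n j t = complex_of_real (6 / real n ^ 3 * P)" by (simp only: e)
  then show ?thesis unfolding P_def .
qed

theorem theorem4p6:
  fixes n :: nat and f :: "real^4 \<Rightarrow> complex"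
  assumes "n \<ge> 1" and "continuous_on triangleH f"
  shows "Lint n f \<in> TSspace n
    \<and> (\<forall>j\<in>Lambda n. Lint n f (node n j) = f (node n j))
    \<and> (\<forall>g\<in>TSspace n. (\<forall>j\<in>Lambda n. g (node n j) = f (node n j)) \<longrightarrow> g = Lint n f)
    \<and> (\<forall>j\<in>Lambda n. \<forall>t\<in>R4H. ell n j t \<in> \<real> \<and>
         ell n j t = complex_of_real (6 / real n ^ 3 *
           Pminus (\<lambda>s. Theta n (s - node n j) - Theta (n - 1) (s - node n j)) t))"
proof -
  have n: "n \<ge> 1" using assms(1) .
  have n0: "n \<noteq> 0" using n by simp
  define a where "a = complex_of_real (144 / real n ^ 3)"
  have an: "a * (of_nat (n^3) / 144) = 1" unfolding a_def using n0 by (simp add: field_simps)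
  have row: "(\<Sum>k\<in>Lambda n. TS k (node n j') * cnj (TS k (node n j))) = (if j' = j then of_nat (n^3) / 144 else 0)"
    if "j \<in> Lambda n" "j' \<in> Lambda n" for j j'
  proof -
    have "(\<Sum>k\<in>Lambda n. TS k (node n j') * cnj (TS k (node n j))) = (\<Sum>k\<in>Lambda n. TS j' (node n k) * cnj (TS j (node n k)))"
      by (simp add: TS_sym[of _ n j'] TS_sym[of _ n j])
    also have "\<dots> = (if j' = j then of_nat (n^3) / 144 else 0)" by (rule ortho[OF n that(2) that(1)])
    finally show ?thesis .
  qed
  have ellnode: "ell n j (node n j') = (if j = j' then 1 else 0)" if "j \<in> Lambda n" "j' \<in> Lambda n" for j j'
    unfolding ell_def row[OF that] a_def[symmetric] using an by auto
  define c0 where "c0 k = a * (\<Sum>j\<in>Lambda n. f (node n j) * cnj (TS k (node n j)))" for k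
  have Lint_eq: "Lint n f t = (\<Sum>k\<in>Lambda n. c0 k * TS k t)" for t
  proof -
    have "Lint n f t = (\<Sum>j\<in>Lambda n. \<Sum>k\<in>Lambda n. a * (f (node n j) * cnj (TS k (node n j))) * TS k t)"
      unfolding Lint_def ell_def a_def[symmetric] by (simp add: sum_distrib_left mult_ac)
    also have "\<dots> = (\<Sum>k\<in>Lambda n. \<Sum>j\<in>Lambda n. a * (f (node n j) * cnj (TS k (node n j))) * TS k t)"
      by (rule sum.swap)
    also have "\<dots> = (\<Sum>k\<in>Lambda n. c0 k * TS k t)"
      unfolding c0_def by (simp add: sum_distrib_left sum_distrib_right)
    finally show ?thesis .
  qed
  have P1: "Lint n f \<in> TSspace n"
    unfolding TSspace_def using Lint_eq by blast
  have P2: "\<forall>j\<in>Lambda n. Lint n f (node n j) = f (node n j)"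
  proof
    fix j' assume j': "j' \<in> Lambda n"
    have "Lint n f (node n j') = (\<Sum>j\<in>Lambda n. f (node n j) * (if j = j' then 1 else 0))"
      unfolding Lint_def by (rule sum.cong[OF refl]) (simp add: ellnode j')
    also have "\<dots> = (\<Sum>j\<in>Lambda n. if j = j' then f (node n j) else 0)"
      by (rule sum.cong[OF refl]) simp
    also have "\<dots> = f (node n j')" using j' by (simp add: finite_subset[OF Lambda_U finite_U])
    finally show "Lint n f (node n j') = f (node n j')" .
  qed
  have P3: "\<forall>g\<in>TSspace n. (\<forall>j\<in>Lambda n. g (node n j) = f (node n j)) \<longrightarrow> g = Lint n f"
  proof (intro ballI impI)
    fix g assume gT: "g \<in> TSspace n" and gi: "\<forall>j\<in>Lambda n. g (node n j) = f (node n j)"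
    obtain c where g: "g = (\<lambda>t. \<Sum>k\<in>Lambda n. c k * TS k t)" using gT unfolding TSspace_def by blast
    have key: "c0 k' = c k'" if k': "k' \<in> Lambda n" for k'
    proof -
      have "(\<Sum>j\<in>Lambda n. f (node n j) * cnj (TS k' (node n j)))
          = (\<Sum>j\<in>Lambda n. (\<Sum>k\<in>Lambda n. c k * TS k (node n j)) * cnj (TS k' (node n j)))"
        by (rule sum.cong[OF refl]) (simp add: gi[rule_format, symmetric] g)
      also have "\<dots> = (\<Sum>j\<in>Lambda n. \<Sum>k\<in>Lambda n. c k * (TS k (node n j) * cnj (TS k' (node n j))))"
        by (rule sum.cong[OF refl]) (simp add: sum_distrib_left sum_distrib_right mult_ac)
      also have "\<dots> = (\<Sum>k\<in>Lambda n. c k * (\<Sum>j\<in>Lambda n. TS k (node n j) * cnj (TS k' (node n j))))"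
        by (subst sum.swap) (simp add: sum_distrib_left)
      also have "\<dots> = (\<Sum>k\<in>Lambda n. c k * (if k = k' then of_nat (n^3) / 144 else 0))"
        by (rule sum.cong[OF refl]) (simp add: ortho[OF n _ k'])
      also have "\<dots> = c k' * (of_nat (n^3) / 144)"
        using k' by (simp add: finite_subset[OF Lambda_U finite_U] if_distrib cong: if_cong)
      finally have "(\<Sum>j\<in>Lambda n. f (node n j) * cnj (TS k' (node n j))) = c k' * (of_nat (n^3) / 144)" .
      then have "c0 k' = a * (c k' * (of_nat (n^3) / 144))" unfolding c0_def by simp
      also have "\<dots> = c k' * (a * (of_nat (n^3) / 144))" by (simp only: mult_ac)
      also have "\<dots> = c k'" unfolding an by simp
      finally show ?thesis .
    qed
    show "g = Lint n f"
    proof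
      fix t
      show "g t = Lint n f t" unfolding g Lint_eq by (rule sum.cong[OF refl]) (simp add: key)
    qed
  qed
  have P4: "\<forall>j\<in>Lambda n. \<forall>t\<in>R4H. ell n j t \<in> \<real> \<and>
         ell n j t = complex_of_real (6 / real n ^ 3 *
           Pminus (\<lambda>s. Theta n (s - node n j) - Theta (n - 1) (s - node n j)) t)"
    using ell_formula[OF n] by auto
  show ?thesis using P1 P2 P3 P4 by blast
qed

end
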